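(* Let $\Phi,\Psi\in\mathbb{R}^{n\times n}$ be symmetric matrices with eigenvalues $\phi_1\le\dots\le\phi_n$ and $\psi_1\le\dots\le\psi_n$ and corresponding orthonormal eigenvectors $w_1,\dots,w_n$ ($\Phi w_i=\phi_iw_i$) and $v_1,\dots,v_n$ ($\Psi v_i=\psi_iv_i$). Fix integers $j\ge0$, $r\ge1$ with $j+r\le n$, let $J=\{j+1,\dots,j+r\}$, $W_j=[w_{j+1},\dots,w_{j+r}]$ and $V_j=[v_{j+1},\dots,v_{j+r}]$. Assume the nonzero eigengap conditions $\phi_{j+1}-\phi_j>0$, $\phi_{j+r+1}-\phi_{j+r}>0$, $\psi_{j+1}-\psi_j>0$, $\psi_{j+r+1}-\psi_{j+r}>0$. Let $p$ be a real polynomial, $p(t)=c_lt^l+\dots+c_1t+c_0$, with $p(\Phi)=c_l\Phi^l+\dots+c_1\Phi+c_0I$. Define the two candidate parameter triplets $$a_1=\min_{i\in J}p(\phi_i),\quad b_1=\max_{i\in J}p(\phi_i),\quad \delta_1=\min(\psi_{j+r+1}-b_1,\ a_1-\psi_j),$$ $$a_2=\psi_{j+1},\quad b_2=\psi_{j+r},\quad \delta_2=\min\Big(\min_{i\in\mathcal{A}_1}p(\phi_i)-b_2,\ a_2-\max_{i\in\mathcal{A}_2}p(\phi_i)\Big),$$ where, for a triplet $(a,b,\delta)$, $\mathcal{A}_1=\{i\in\{1,\dots,n\}\setminus J: p(\phi_i)>b\}$ and $\mathcal{A}_2=\{i\in\{1,\dots,n\}\setminus J: p(\phi_i)<a\}$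 (in $\delta_2$ these are taken with $a=a_2,b=b_2$). Suppose that one of the following holds: (A) with $a=a_1,b=b_1$ one has $\mathcal{A}_1\cup\mathcal{A}_2=\{1,\dots,n\}\setminus J$, and $\delta_1>0$, $a_1-\psi_{j+1}<\delta_1$, $\psi_{j+r}-b_1<\delta_1$; in this case set $\delta=\delta_1$; (B) with $a=a_2,b=b_2$ one has $\mathcal{A}_1\cup\mathcal{A}_2=\{1,\dots,n\}\setminus J$, and $\delta_2>0$, $a_2-\min_{i\in J}p(\phi_i)<\delta_2$, $\max_{i\in J}p(\phi_i)-b_2<\delta_2$; in this case set $\delta=\delta_2$. Then for every unitarily invariant norm $\|\cdot\|$, $$\big\|W_jW_j^T(I-V_jV_j^T)\big\|\le\frac{\|p(\Phi)-\Psi\|}{\delta}.$$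
   Context: Convention: eigenvalues with out-of-range indices are interpreted as $\phi_0=\psi_0=-\infty$ and $\phi_{n+1}=\psi_{n+1}=+\infty$ (so conditions involving them are vacuous when $j=0$ or $j+r=n$), and a minimum over an empty index set is $+\infty$, a maximum over an empty index set is $-\infty$. A norm on $n\times n$ matrices is unitarily invariant if $\|UXV\|=\|X\|$ for all orthogonal $U,V$. $I$ is the $n\times n$ identity matrix. *)

theory Defs
  imports "HOL-Analysis.Analysis" "HOL-Computational_Algebra.Polynomial"
    "HOL-Library.Extended_Real"
begin

fun mat_pow :: "real^'n^'n \<Rightarrow> nat \<Rightarrow> real^'n^'n" where
  "mat_pow A 0 = mat 1"
| "mat_pow A (Suc k) = A ** mat_pow A k"

definition poly_mat :: "real poly \<Rightarrow> real^'n^'n \<Rightarrow> real^'n^'n" where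
  "poly_mat p A = (\<Sum>i\<le>degree p. coeff p i *\<^sub>R mat_pow A i)"

definition unitarily_invariant_norm :: "(real^'n^'n \<Rightarrow> real) \<Rightarrow> bool" where
  "unitarily_invariant_norm N \<longleftrightarrow>
     (\<forall>X. 0 \<le> N X) \<and> (\<forall>X. N X = 0 \<longleftrightarrow> X = 0) \<and>
     (\<forall>X Y. N (X + Y) \<le> N X + N Y) \<and> (\<forall>c X. N (c *\<^sub>R X) = \<bar>c\<bar> * N X) \<and>
     (\<forall>U V X. orthogonal_matrix U \<longrightarrow> orthogonal_matrix V \<longrightarrow> N (U ** X ** V) = N X)"

definition ext_eig :: "nat \<Rightarrow> (nat \<Rightarrow> real) \<Rightarrow> nat \<Rightarrow> ereal" where
  "ext_eig n f k = (if k = 0 then -\<infinity> else if n < k then \<infinity> else ereal (f k))"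

text \<open>W W^T for W = [u_i]_{i \<in> J} (sum of outer products).\<close>
definition proj_mat :: "(nat \<Rightarrow> real^'n) \<Rightarrow> nat set \<Rightarrow> real^'n^'n" where
  "proj_mat u J = (\<chi> a b. \<Sum>i\<in>J. u i $ a * u i $ b)"

definition calA1 :: "nat \<Rightarrow> nat set \<Rightarrow> (nat \<Rightarrow> real) \<Rightarrow> real \<Rightarrow> nat set" where
  "calA1 n J pp b = {i \<in> {1..n} - J. pp i > b}"
definition calA2 :: "nat \<Rightarrow> nat set \<Rightarrow> (nat \<Rightarrow> real) \<Rightarrow> real \<Rightarrow> nat set" where
  "calA2 n J pp a = {i \<in> {1..n} - J. pp i < a}"

end

theory Submission
  imports Defs
begin

definition outer :: "real^'n \<Rightarrow> real^'n \<Rightarrow> real^'n^'n" where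
  "outer x y = (\<chi> a b. x$a * y$b)"

lemma outer_mult_vec: "outer x y *v z = (y \<bullet> z) *\<^sub>R x"
  by (simp add: outer_def matrix_vector_mult_def inner_vec_def vec_eq_iff sum_distrib_left mult_ac)

lemma outer_mult_outer: "outer x y ** outer z t = (y \<bullet> z) *\<^sub>R outer x t"
  by (simp add: outer_def matrix_matrix_mult_def inner_vec_def vec_eq_iff sum_distrib_left sum_distrib_right mult_ac)

lemma mat_mult_outer: "M ** outer x y = outer (M *v x) y"
  by (simp add: outer_def matrix_matrix_mult_def matrix_vector_mult_def vec_eq_iff sum_distrib_right sum_distrib_left mult_ac)

lemma outer_mult_mat: "outer x y ** M = outer x (transpose M *v y)"
  by (simp add: outer_def matrix_matrix_mult_def matrix_vector_mult_def transpose_def vec_eq_iff sum_distrib_left mult_ac)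

lemma transpose_outer: "transpose (outer x y) = outer y x"
  by (simp add: outer_def transpose_def vec_eq_iff mult_ac)

lemma outer_scaleR_left: "outer (c *\<^sub>R x) y = c *\<^sub>R outer x y"
  by (simp add: outer_def vec_eq_iff mult_ac)
lemma outer_scaleR_right: "outer x (c *\<^sub>R y) = c *\<^sub>R outer x y"
  by (simp add: outer_def vec_eq_iff mult_ac)
lemma outer_add_left: "outer (x + z) y = outer x y + outer z y"
  by (simp add: outer_def vec_eq_iff algebra_simps)
lemma outer_add_right: "outer x (y + z) = outer x y + outer x z"
  by (simp add: outer_def vec_eq_iff algebra_simps)
lemma outer_diff_left: "outer (x - z) y = outer x y - outer z y"
  by (simp add: outer_def vec_eq_iff algebra_simps)
lemma outer_diff_right: "outer x (y - z) = outer x y - outer x z"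
  by (simp add: outer_def vec_eq_iff algebra_simps)
lemma outer_zero_left[simp]: "outer 0 y = 0" by (simp add: outer_def vec_eq_iff)
lemma outer_zero_right[simp]: "outer x 0 = 0" by (simp add: outer_def vec_eq_iff)

lemma mat_add_rdistrib: "(A + B) ** (C::real^'n^'n) = A ** C + B ** C"
  by (vector matrix_matrix_mult_def sum.distrib[symmetric] field_simps)
lemma mat_diff_rdistrib: "(A - B) ** (C::real^'n^'n) = A ** C - B ** C"
  by (vector matrix_matrix_mult_def sum_subtractf[symmetric] field_simps)
lemma mat_diff_ldistrib: "(C::real^'n^'n) ** (A - B) = C ** A - C ** B"
  by (vector matrix_matrix_mult_def sum_subtractf[symmetric] field_simps)
lemma transpose_add: "transpose (A + B) = transpose A + transpose (B::real^'n^'n)"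
  by (vector transpose_def)
lemma transpose_diff: "transpose (A - B) = transpose A - transpose (B::real^'n^'n)"
  by (vector transpose_def)
lemma mat_vec_diff: "(A - B) *v (x::real^'n) = A *v x - B *v x"
  by (simp add: matrix_vector_mult_diff_rdistrib)

lemma matrix_mul_sum_right: "M ** (\<Sum>i\<in>K. f i) = (\<Sum>i\<in>K. M ** f i)"
  by (induction K rule: infinite_finite_induct) (auto simp: matrix_add_ldistrib)
lemma matrix_mul_sum_left: "(\<Sum>i\<in>K. f i) ** (M::real^'n^'n) = (\<Sum>i\<in>K. f i ** M)"
  by (induction K rule: infinite_finite_induct) (auto simp: mat_add_rdistrib)
lemma matrix_vec_sum_left: "(\<Sum>i\<in>K. f i) *v x = (\<Sum>i\<in>K. f i *v x)"
  by (induction K rule: infinite_finite_induct) (auto simp: matrix_vector_mult_add_rdistrib)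
lemma transpose_zero[simp]: "transpose (0::real^'n^'n) = 0"
  by (vector transpose_def)
lemma transpose_sum: "transpose (\<Sum>i\<in>K. f i) = (\<Sum>i\<in>K. transpose (f i::real^'n^'n))"
  by (induction K rule: infinite_finite_induct) (auto simp: transpose_add)

lemma proj_mat_outer: "proj_mat u J = (\<Sum>i\<in>J. outer (u i) (u i))"
  by (simp add: proj_mat_def outer_def vec_eq_iff sum_component)

definition orthonormal_on :: "'i set \<Rightarrow> ('i \<Rightarrow> real^'n) \<Rightarrow> bool" where
  "orthonormal_on K a \<longleftrightarrow> (\<forall>i\<in>K. \<forall>k\<in>K. a i \<bullet> a k = (if i = k then 1 else 0))"

lemma orthonormal_onD: "orthonormal_on K a \<Longrightarrow> i \<in> K \<Longrightarrow> k \<in> K \<Longrightarrow> a i \<bullet> a k = (if i = k then 1 else 0)"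
  by (simp add: orthonormal_on_def)

lemma orthonormal_on_subset: "orthonormal_on K a \<Longrightarrow> L \<subseteq> K \<Longrightarrow> orthonormal_on L a"
  unfolding orthonormal_on_def by blast

lemma projsum_vec: "(\<Sum>i\<in>K. outer (a i) (a i)) *v x = (\<Sum>i\<in>K. (a i \<bullet> x) *\<^sub>R a i)"
  by (simp add: matrix_vec_sum_left outer_mult_vec)

lemma orthonormal_inner_sum:
  assumes "orthonormal_on K a" "finite K" "k \<in> K"
  shows "a k \<bullet> (\<Sum>i\<in>K. c i *\<^sub>R a i) = c k"
proof -
  have "a k \<bullet> (\<Sum>i\<in>K. c i *\<^sub>R a i) = (\<Sum>i\<in>K. c i * (a k \<bullet> a i))"
    by (simp add: inner_sum_right)
  also have "\<dots> = (\<Sum>i\<in>K. if i = k then c i else 0)"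
    using assms by (intro sum.cong) (auto simp: orthonormal_onD)
  also have "\<dots> = c k" using assms by simp
  finally show ?thesis .
qed

lemma orthonormal_inj: "orthonormal_on K a \<Longrightarrow> inj_on a K"
  unfolding inj_on_def by (metis orthonormal_onD zero_neq_one)

lemma orthonormal_independent:
  assumes "orthonormal_on K a"
  shows "independent (a ` K)"
proof (rule pairwise_orthogonal_independent)
  show "pairwise orthogonal (a ` K)"
    using assms unfolding pairwise_def orthogonal_def by (auto simp: orthonormal_onD)
  show "0 \<notin> a ` K"
    using assms by (auto dest: orthonormal_onD)
qed

lemma orthonormal_card: "orthonormal_on K a \<Longrightarrow> card (a ` K) = card K"
  by (simp add: card_image orthonormal_inj)

lemma orthonormal_dim_span: "orthonormal_on K a \<Longrightarrow> dim (span (a ` K)) = card K"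
  by (metis dim_span_eq_card_independent orthonormal_independent orthonormal_card)

lemma orthonormal_residual_orth:
  assumes "orthonormal_on K a" "finite K"
  shows "\<And>y. y \<in> span (a ` K) \<Longrightarrow> (x - (\<Sum>i\<in>K. (a i \<bullet> x) *\<^sub>R a i)) \<bullet> y = 0"
proof -
  fix y assume y: "y \<in> span (a ` K)"
  have "orthogonal (x - (\<Sum>i\<in>K. (a i \<bullet> x) *\<^sub>R a i)) y"
  proof (rule orthogonal_to_span[OF y])
    fix z assume "z \<in> a ` K"
    then obtain k where k: "k \<in> K" "z = a k" by auto
    show "orthogonal (x - (\<Sum>i\<in>K. (a i \<bullet> x) *\<^sub>R a i)) z"
      using orthonormal_inner_sum[OF assms k(1), of "\<lambda>i. a i \<bullet> x"] k
      by (simp add: orthogonal_def inner_diff_right inner_commute)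
  qed
  then show "(x - (\<Sum>i\<in>K. (a i \<bullet> x) *\<^sub>R a i)) \<bullet> y = 0" by (simp add: orthogonal_def)
qed

lemma projsum_in_span: "(\<Sum>i\<in>K. c i *\<^sub>R a i) \<in> span (a ` K)"
  by (intro span_sum span_mul span_base) auto

lemma projsum_eq:
  assumes "orthonormal_on K a" "finite K" "orthonormal_on L b" "finite L"
    and "span (a ` K) = span (b ` L)"
  shows "(\<Sum>i\<in>K. outer (a i) (a i)) = (\<Sum>i\<in>L. outer (b i) (b i))"
proof (subst matrix_eq, intro allI)
  fix x
  define p where "p = (\<Sum>i\<in>K. (a i \<bullet> x) *\<^sub>R a i)"
  define q where "q = (\<Sum>i\<in>L. (b i \<bullet> x) *\<^sub>R b i)"
  have pS: "p \<in> span (a ` K)" unfolding p_def by (rule projsum_in_span)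
  have qS: "q \<in> span (a ` K)" unfolding q_def assms(5) by (rule projsum_in_span)
  have "p - q \<in> span (a ` K)" using pS qS by (simp add: span_diff)
  then have 1: "(x - p) \<bullet> (p - q) = 0" "(x - q) \<bullet> (p - q) = 0"
    using orthonormal_residual_orth[OF assms(1,2)] orthonormal_residual_orth[OF assms(3,4)] assms(5)
    unfolding p_def q_def by auto
  have "(p - q) \<bullet> (p - q) = (x - q) \<bullet> (p - q) - (x - p) \<bullet> (p - q)"
    by (simp add: inner_diff_left)
  then have pq: "p = q" using 1 by simp
  have "(\<Sum>i\<in>K. outer (a i) (a i)) *v x = p" by (simp only: projsum_vec p_def)
  also have "\<dots> = q" by (rule pq)
  also have "\<dots> = (\<Sum>i\<in>L. outer (b i) (b i)) *v x" by (simp only: projsum_vec q_def)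
  finally show "(\<Sum>i\<in>K. outer (a i) (a i)) *v x = (\<Sum>i\<in>L. outer (b i) (b i)) *v x" .
qed

lemma orthonormal_span_UNIV:
  assumes "orthonormal_on K a" "finite K" "card K = CARD('n)"
  shows "span (a ` K) = (UNIV :: (real^'n) set)"
proof -
  have d: "dim (UNIV::(real^'n) set) = CARD('n)" by simp
  have "UNIV \<subseteq> span (a ` K)"
    using card_eq_dim[of "a ` K" UNIV] assms(2) orthonormal_independent[OF assms(1)]
      orthonormal_card[OF assms(1)] assms(3) d by simp
  then show ?thesis by auto
qed

lemma projsum_complete:
  assumes "orthonormal_on K a" "finite K" "card K = CARD('n)"
  shows "(\<Sum>i\<in>K. outer (a i) (a i)) = (mat 1 :: real^'n^'n)"
proof (subst matrix_eq, intro allI)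
  fix x :: "real^'n"
  define p where "p = (\<Sum>i\<in>K. (a i \<bullet> x) *\<^sub>R a i)"
  have "(x - p) \<bullet> (x - p) = 0"
    using orthonormal_residual_orth[OF assms(1,2)] orthonormal_span_UNIV[OF assms] unfolding p_def by auto
  then have "p = x" by simp
  then show "(\<Sum>i\<in>K. outer (a i) (a i)) *v x = mat 1 *v x"
    unfolding projsum_vec matrix_vector_mul_lid p_def .
qed

lemma projsum_apply_span:
  assumes "orthonormal_on K a" "finite K" "x \<in> span (a ` K)"
  shows "(\<Sum>i\<in>K. outer (a i) (a i)) *v x = x"
proof -
  define p where "p = (\<Sum>i\<in>K. (a i \<bullet> x) *\<^sub>R a i)"
  have "x - p \<in> span (a ` K)" unfolding p_def by (rule span_diff[OF assms(3) projsum_in_span])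
  then have "(x - p) \<bullet> (x - p) = 0"
    using orthonormal_residual_orth[OF assms(1,2)] unfolding p_def by auto
  then have "p = x" by simp
  then show ?thesis unfolding projsum_vec p_def .
qed

lemma mat_scaleR_right: "(A::real^'n^'n) ** (k *\<^sub>R B) = k *\<^sub>R (A ** B)"
  by (simp add: matrix_matrix_mult_def vec_eq_iff sum_distrib_left mult_ac)
lemma mat_scaleR_left: "(k *\<^sub>R (A::real^'n^'n)) ** B = k *\<^sub>R (A ** B)"
  by (simp add: matrix_matrix_mult_def vec_eq_iff sum_distrib_left mult_ac)
lemma mat_scaleR_vec: "(k *\<^sub>R (A::real^'n^'n)) *v x = k *\<^sub>R (A *v x)"
  by (simp add: matrix_vector_mult_def vec_eq_iff sum_distrib_left mult_ac)

definition diagm :: "'i set \<Rightarrow> ('i \<Rightarrow> real^'n) \<Rightarrow> ('i \<Rightarrow> real) \<Rightarrow> real^'n^'n" where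
  "diagm K u c = (\<Sum>i\<in>K. c i *\<^sub>R outer (u i) (u i))"

lemma outer_mult_diagm:
  assumes "orthonormal_on K u" "finite K" "i \<in> K"
  shows "outer x (u i) ** diagm K u e = e i *\<^sub>R outer x (u i)"
proof -
  have "outer x (u i) ** diagm K u e = (\<Sum>k\<in>K. e k *\<^sub>R ((u i \<bullet> u k) *\<^sub>R outer x (u k)))"
    unfolding diagm_def matrix_mul_sum_right
    by (intro sum.cong refl) (simp add: mat_scaleR_right outer_mult_outer)
  also have "\<dots> = (\<Sum>k\<in>K. if k = i then e i *\<^sub>R outer x (u i) else 0)"
    using assms by (intro sum.cong refl) (auto simp: orthonormal_onD)
  also have "\<dots> = e i *\<^sub>R outer x (u i)" using assms by simp
  finally show ?thesis .
qed

lemma diagm_mult: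
  assumes "orthonormal_on K u" "finite K"
  shows "diagm K u c ** diagm K u e = diagm K u (\<lambda>i. c i * e i)"
proof -
  have "diagm K u c ** diagm K u e = (\<Sum>i\<in>K. c i *\<^sub>R (outer (u i) (u i) ** diagm K u e))"
    unfolding diagm_def[of K u c] matrix_mul_sum_left
    by (intro sum.cong refl) (simp add: mat_scaleR_left)
  also have "\<dots> = (\<Sum>i\<in>K. (c i * e i) *\<^sub>R outer (u i) (u i))"
    by (intro sum.cong refl) (simp add: outer_mult_diagm[OF assms])
  also have "\<dots> = diagm K u (\<lambda>i. c i * e i)" by (simp add: diagm_def)
  finally show ?thesis .
qed

lemma transpose_diagm: "transpose (diagm K u c) = diagm K u c"
  by (simp add: diagm_def transpose_sum transpose_scalar transpose_outer)

lemma diagm_vec: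
  assumes "orthonormal_on K u" "finite K" "k \<in> K"
  shows "diagm K u c *v u k = c k *\<^sub>R u k"
proof -
  have "diagm K u c *v u k = (\<Sum>i\<in>K. (c i * (u i \<bullet> u k)) *\<^sub>R u i)"
    unfolding diagm_def matrix_vec_sum_left
    by (intro sum.cong refl) (simp add: mat_scaleR_vec outer_mult_vec)
  also have "\<dots> = (\<Sum>i\<in>K. if i = k then c k *\<^sub>R u k else 0)"
    using assms by (intro sum.cong refl) (auto simp: orthonormal_onD)
  also have "\<dots> = c k *\<^sub>R u k" using assms by simp
  finally show ?thesis .
qed

lemma diagm_add: "diagm K u (\<lambda>i. c i + e i) = diagm K u c + diagm K u e"
  by (simp add: diagm_def scaleR_add_left sum.distrib)
lemma diagm_diff: "diagm K u (\<lambda>i. c i - e i) = diagm K u c - diagm K u e"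
  by (simp add: diagm_def scaleR_diff_left sum_subtractf)
lemma diagm_scale: "diagm K u (\<lambda>i. s * c i) = s *\<^sub>R diagm K u c"
  by (simp add: diagm_def scaleR_sum_right)
lemma diagm_cong: "(\<And>i. i \<in> K \<Longrightarrow> c i = e i) \<Longrightarrow> diagm K u c = diagm K u e"
  by (simp add: diagm_def)
lemma diagm_one:
  fixes u :: "'i \<Rightarrow> real^'n"
  assumes "orthonormal_on K u" "finite K" "card K = CARD('n)"
  shows "diagm K u (\<lambda>i. 1) = mat 1"
  using projsum_complete[OF assms] by (simp add: diagm_def)
lemma diagm_zero: "diagm K u (\<lambda>i. 0) = 0"
  by (simp add: diagm_def)

lemma uin_props:
  assumes "unitarily_invariant_norm N"
  shows "N 0 = 0" "\<And>X. N (- X) = N X" "\<And>X Y. N (X + Y) \<le> N X + N Y"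
    "\<And>X Y. N (X - Y) \<le> N X + N Y" "\<And>c X. N (c *\<^sub>R X) = \<bar>c\<bar> * N X" "\<And>X. 0 \<le> N X"
    "\<And>U V X. orthogonal_matrix U \<Longrightarrow> orthogonal_matrix V \<Longrightarrow> N (U ** X ** V) = N X"
proof -
  note A = assms[unfolded unitarily_invariant_norm_def]
  show "N 0 = 0" using A by blast
  show neg: "\<And>X. N (- X) = N X" using A by (metis abs_minus_cancel abs_one mult_1 scaleR_minus1_left)
  show "\<And>X Y. N (X + Y) \<le> N X + N Y" using A by blast
  show "\<And>X Y. N (X - Y) \<le> N X + N Y" using A neg by (metis diff_conv_add_uminus)
  show "\<And>c X. N (c *\<^sub>R X) = \<bar>c\<bar> * N X" using A by blast
  show "\<And>X. 0 \<le> N X" using A by blast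
  show "\<And>U V X. orthogonal_matrix U \<Longrightarrow> orthogonal_matrix V \<Longrightarrow> N (U ** X ** V) = N X" using A by blast
qed

lemma contraction_unit:
  fixes u :: "'i \<Rightarrow> real^'n" and K :: "'i set"
  assumes N: "unitarily_invariant_norm N"
    and u: "orthonormal_on K u" "finite K" "card K = CARD('n)"
    and F: "finite F"
  shows "\<forall>d. (\<forall>i\<in>K. \<bar>d i\<bar> \<le> 1) \<longrightarrow> (\<forall>i\<in>K - F. \<bar>d i\<bar> = 1) \<longrightarrow>
      N (diagm K u d ** X) \<le> N X \<and> N (X ** diagm K u d) \<le> N X"
  using F
proof (induction F)
  case empty
  show ?case
  proof (intro allI impI)
    fix d :: "'i \<Rightarrow> real"
    assume "\<forall>i\<in>K - {}. \<bar>d i\<bar> = 1"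
    then have d2: "\<And>i. i \<in> K \<Longrightarrow> d i * d i = 1"
    proof -
      fix i assume "\<forall>i\<in>K - {}. \<bar>d i\<bar> = 1" "i \<in> K"
      then have "\<bar>d i\<bar> = 1" by simp
      then show "d i * d i = 1" by (cases "d i < 0") (simp_all add: abs_if)
    qed
    have "diagm K u d ** diagm K u d = diagm K u (\<lambda>i. 1)"
      using u by (simp add: diagm_mult d2 cong: diagm_cong)
    then have "diagm K u d ** diagm K u d = mat 1" using diagm_one[OF u] by simp
    then have orth: "orthogonal_matrix (diagm K u d)"
      by (simp add: orthogonal_matrix transpose_diagm)
    have "N (diagm K u d ** X) = N (diagm K u d ** X ** mat 1)" by simp
    also have "\<dots> = N X" using uin_props(7)[OF N orth orthogonal_matrix_id] .
    finally have 1: "N (diagm K u d ** X) = N X" .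
    have "N (X ** diagm K u d) = N (mat 1 ** X ** diagm K u d)" by simp
    also have "\<dots> = N X" using uin_props(7)[OF N orthogonal_matrix_id orth] .
    finally show "N (diagm K u d ** X) \<le> N X \<and> N (X ** diagm K u d) \<le> N X" using 1 by simp
  qed
next
  case (insert k F)
  show ?case
  proof (intro allI impI)
    fix d :: "'i \<Rightarrow> real"
    assume d1: "\<forall>i\<in>K. \<bar>d i\<bar> \<le> 1" and d2: "\<forall>i\<in>K - insert k F. \<bar>d i\<bar> = 1"
    define dp where "dp = d(k := 1)"
    define dm where "dm = d(k := -1)"
    define dk where "dk = (if k \<in> K then d k else 0)"
    have dk1: "\<bar>dk\<bar> \<le> 1" using d1 by (simp add: dk_def)
    define \<alpha> where "\<alpha> = (1 + dk) / 2"
    define \<beta> where "\<beta> = (1 - dk) / 2"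
    have ab: "\<alpha> \<ge> 0" "\<beta> \<ge> 0" "\<alpha> + \<beta> = 1"
      using dk1 unfolding \<alpha>_def \<beta>_def by (auto simp: abs_le_iff field_simps)
    have "diagm K u d = diagm K u (\<lambda>i. \<alpha> * dp i + \<beta> * dm i)"
      by (rule diagm_cong) (auto simp: dp_def dm_def \<alpha>_def \<beta>_def dk_def field_simps)
    also have "\<dots> = \<alpha> *\<^sub>R diagm K u dp + \<beta> *\<^sub>R diagm K u dm"
      by (simp add: diagm_add diagm_scale)
    finally have dec: "diagm K u d = \<alpha> *\<^sub>R diagm K u dp + \<beta> *\<^sub>R diagm K u dm" .
    have hp: "\<forall>i\<in>K. \<bar>dp i\<bar> \<le> 1" "\<forall>i\<in>K - F. \<bar>dp i\<bar> = 1"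
      using d1 d2 by (auto simp: dp_def)
    have hm: "\<forall>i\<in>K. \<bar>dm i\<bar> \<le> 1" "\<forall>i\<in>K - F. \<bar>dm i\<bar> = 1"
      using d1 d2 by (auto simp: dm_def)
    have IHp: "N (diagm K u dp ** X) \<le> N X \<and> N (X ** diagm K u dp) \<le> N X"
      by (rule insert.IH[THEN spec[of _ dp], THEN mp, THEN mp, OF hp(1) hp(2)])
    have IHm: "N (diagm K u dm ** X) \<le> N X \<and> N (X ** diagm K u dm) \<le> N X"
      by (rule insert.IH[THEN spec[of _ dm], THEN mp, THEN mp, OF hm(1) hm(2)])
    have "N (diagm K u d ** X) = N (\<alpha> *\<^sub>R (diagm K u dp ** X) + \<beta> *\<^sub>R (diagm K u dm ** X))"
      by (simp add: dec mat_add_rdistrib mat_scaleR_left)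
    also have "\<dots> \<le> N (\<alpha> *\<^sub>R (diagm K u dp ** X)) + N (\<beta> *\<^sub>R (diagm K u dm ** X))"
      by (rule uin_props(3)[OF N])
    also have "\<dots> = \<alpha> * N (diagm K u dp ** X) + \<beta> * N (diagm K u dm ** X)"
      using ab by (simp add: uin_props(5)[OF N])
    also have "\<dots> \<le> \<alpha> * N X + \<beta> * N X"
      using IHp IHm ab by (intro add_mono mult_left_mono) auto
    also have "\<dots> = N X" by (subst distrib_right[symmetric]) (simp add: ab(3))
    finally have 1: "N (diagm K u d ** X) \<le> N X" .
    have "N (X ** diagm K u d) = N (\<alpha> *\<^sub>R (X ** diagm K u dp) + \<beta> *\<^sub>R (X ** diagm K u dm))"
      by (simp add: dec matrix_add_ldistrib mat_scaleR_right)
    also have "\<dots> \<le> N (\<alpha> *\<^sub>R (X ** diagm K u dp)) + N (\<beta> *\<^sub>R (X ** diagm K u dm))"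
      by (rule uin_props(3)[OF N])
    also have "\<dots> = \<alpha> * N (X ** diagm K u dp) + \<beta> * N (X ** diagm K u dm)"
      using ab by (simp add: uin_props(5)[OF N])
    also have "\<dots> \<le> \<alpha> * N X + \<beta> * N X"
      using IHp IHm ab by (intro add_mono mult_left_mono) auto
    also have "\<dots> = N X" by (subst distrib_right[symmetric]) (simp add: ab(3))
    finally show "N (diagm K u d ** X) \<le> N X \<and> N (X ** diagm K u d) \<le> N X" using 1 by simp
  qed
qed

lemma contraction:
  fixes u :: "'i \<Rightarrow> real^'n" and K :: "'i set"
  assumes N: "unitarily_invariant_norm N"
    and u: "orthonormal_on K u" "finite K" "card K = CARD('n)"
    and m: "\<And>i. i \<in> K \<Longrightarrow> \<bar>m i\<bar> \<le> \<kappa>" and kp: "0 \<le> \<kappa>"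
  shows "N (diagm K u m ** X) \<le> \<kappa> * N X" "N (X ** diagm K u m) \<le> \<kappa> * N X"
proof -
  have both: "N (diagm K u m ** X) \<le> \<kappa> * N X \<and> N (X ** diagm K u m) \<le> \<kappa> * N X"
  proof (cases "\<kappa> = 0")
    case True
    then have "diagm K u m = 0" using m by (simp add: diagm_def)
    then show ?thesis using uin_props(1)[OF N] True by simp
  next
    case False
    then have kp': "\<kappa> > 0" using kp by simp
    define d where "d = (\<lambda>i. m i / \<kappa>)"
    have d1: "\<forall>i\<in>K. \<bar>d i\<bar> \<le> 1"
    proof
      fix i assume "i \<in> K"
      then have "\<bar>m i\<bar> \<le> \<kappa>" by (rule m)
      then have mi: "\<bar>m i\<bar> / \<kappa> \<le> 1" using kp' by (simp add: pos_divide_le_eq)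
      have "\<bar>d i\<bar> = \<bar>m i\<bar> / \<kappa>" using kp' unfolding d_def by (simp add: abs_divide)
      then show "\<bar>d i\<bar> \<le> 1" using mi by simp
    qed
    have "diagm K u m = diagm K u (\<lambda>i. \<kappa> * d i)"
      by (rule diagm_cong) (use kp' in \<open>simp add: d_def\<close>)
    then have dm: "diagm K u m = \<kappa> *\<^sub>R diagm K u d" by (simp only: diagm_scale)
    have C: "N (diagm K u d ** X) \<le> N X \<and> N (X ** diagm K u d) \<le> N X"
      by (rule contraction_unit[OF N u \<open>finite K\<close>, THEN spec[of _ d], THEN mp, THEN mp, OF d1]) simp
    have "N (diagm K u m ** X) = N (\<kappa> *\<^sub>R (diagm K u d ** X))" by (simp only: dm mat_scaleR_left)
    also have "\<dots> = \<kappa> * N (diagm K u d ** X)" using kp' by (simp add: uin_props(5)[OF N])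
    also have "\<dots> \<le> \<kappa> * N X" using C kp' by (simp add: mult_left_mono)
    finally have 1: "N (diagm K u m ** X) \<le> \<kappa> * N X" .
    have "N (X ** diagm K u m) = N (\<kappa> *\<^sub>R (X ** diagm K u d))" by (simp only: dm mat_scaleR_right)
    also have "\<dots> = \<kappa> * N (X ** diagm K u d)" using kp' by (simp add: uin_props(5)[OF N])
    also have "\<dots> \<le> \<kappa> * N X" using C kp' by (simp add: mult_left_mono)
    finally show ?thesis using 1 by simp
  qed
  then show "N (diagm K u m ** X) \<le> \<kappa> * N X" "N (X ** diagm K u m) \<le> \<kappa> * N X" by auto
qed

lemma aux_field: "(s::real) \<noteq> 0 \<Longrightarrow> s * (r * ((1 / s) * x) + (1 / s) * e) = r * x + e"
  by (simp add: field_simps)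

lemma sylvester:
  fixes A B :: "real^'n^'n" and u v :: "'i \<Rightarrow> real^'n" and K :: "'i set"
  assumes N: "unitarily_invariant_norm N"
    and u: "orthonormal_on K u" "finite K" "card K = CARD('n)"
    and v: "orthonormal_on K v"
    and A: "A = diagm K u \<alpha>" and B: "B = diagm K v \<beta>"
    and ab: "a \<le> b" and dp: "\<delta> > 0"
    and al: "\<And>i. i \<in> K \<Longrightarrow> i \<in> I1 \<Longrightarrow> a \<le> \<alpha> i \<and> \<alpha> i \<le> b"
    and be: "\<And>i. i \<in> K \<Longrightarrow> i \<in> I2 \<Longrightarrow> \<beta> i \<le> a - \<delta> \<or> b + \<delta> \<le> \<beta> i"
  shows "\<delta> * N (diagm K u (\<lambda>i. if i \<in> I1 then 1 else 0) ** diagm K v (\<lambda>i. if i \<in> I2 then 1 else 0))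
           \<le> N (A - B)"
proof -
  have fK: "finite K" by fact
  have vK: "orthonormal_on K v" "finite K" "card K = CARD('n)" using v u by auto
  define c where "c = (a + b) / 2"
  define \<rho> where "\<rho> = (b - a) / 2"
  have rho0: "\<rho> \<ge> 0" using ab by (simp add: \<rho>_def)
  define e1 where "e1 = (\<lambda>i. if i \<in> I1 then 1 else 0 :: real)"
  define e2 where "e2 = (\<lambda>i. if i \<in> I2 then 1 else 0 :: real)"
  define P1 where "P1 = diagm K u e1"
  define P2 where "P2 = diagm K v e2"
  define X where "X = P1 ** P2"
  define E where "E = A - B"
  define Ac where "Ac = diagm K u (\<lambda>i. e1 i * (\<alpha> i - c))"
  define Bc where "Bc = diagm K v (\<lambda>i. e2 i * (\<beta> i - c))"
  define G where "G = diagm K v (\<lambda>i. e2 i / (\<beta> i - c))"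
  have bc: "\<bar>\<beta> i - c\<bar> \<ge> \<rho> + \<delta>" if "i \<in> K" "i \<in> I2" for i
  proof -
    have "\<beta> i \<le> a - \<delta> \<or> b + \<delta> \<le> \<beta> i" using be that by blast
    then show ?thesis using ab dp unfolding c_def \<rho>_def by (auto split: abs_split simp: field_simps)
  qed
  have bc0: "\<And>i. i \<in> K \<Longrightarrow> i \<in> I2 \<Longrightarrow> \<beta> i - c \<noteq> 0"
    using bc rho0 dp by fastforce
  have P1A: "P1 ** A = Ac + c *\<^sub>R P1"
    unfolding P1_def A Ac_def diagm_mult[OF u(1,2)] diagm_scale[symmetric] diagm_add[symmetric]
    by (rule diagm_cong) (simp add: algebra_simps)
  have BP2: "B ** P2 = Bc + c *\<^sub>R P2"
    unfolding P2_def B Bc_def diagm_mult[OF vK(1,2)] diagm_scale[symmetric] diagm_add[symmetric]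
    by (rule diagm_cong) (simp add: algebra_simps)
  have AcP1: "Ac ** P1 = Ac"
    unfolding P1_def Ac_def diagm_mult[OF u(1,2)] by (rule diagm_cong) (simp add: e1_def)
  have P1P1: "P1 ** P1 = P1"
    unfolding P1_def diagm_mult[OF u(1,2)] by (rule diagm_cong) (simp add: e1_def)
  have P2P2: "P2 ** P2 = P2"
    unfolding P2_def diagm_mult[OF vK(1,2)] by (rule diagm_cong) (simp add: e2_def)
  have P2Bc: "P2 ** Bc = Bc"
    unfolding P2_def Bc_def diagm_mult[OF vK(1,2)] by (rule diagm_cong) (simp add: e2_def)
  have BcG: "Bc ** G = P2"
    unfolding P2_def Bc_def G_def diagm_mult[OF vK(1,2)] by (rule diagm_cong) (use bc0 in \<open>force simp: e2_def\<close>)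
  have P2G: "P2 ** G = G"
    unfolding P2_def G_def diagm_mult[OF vK(1,2)] by (rule diagm_cong) (simp add: e2_def)
  have "P1 ** E ** P2 = (P1 ** A) ** P2 - P1 ** (B ** P2)"
    unfolding E_def by (simp add: mat_diff_ldistrib mat_diff_rdistrib matrix_mul_assoc)
  also have "\<dots> = Ac ** P2 - P1 ** Bc"
    unfolding P1A BP2 by (simp add: mat_add_rdistrib matrix_add_ldistrib mat_scaleR_right
        mat_scaleR_left algebra_simps)
  also have "\<dots> = Ac ** X - X ** Bc"
  proof -
    have "Ac ** X = Ac ** P2" unfolding X_def by (simp add: matrix_mul_assoc AcP1)
    moreover have "X ** Bc = P1 ** Bc" unfolding X_def by (simp add: matrix_mul_assoc[symmetric] P2Bc)
    ultimately show ?thesis by simp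
  qed
  finally have syl: "P1 ** E ** P2 = Ac ** X - X ** Bc" .
  have "X = X ** P2" unfolding X_def by (simp add: matrix_mul_assoc[symmetric] P2P2)
  also have "\<dots> = (X ** Bc) ** G" by (simp add: matrix_mul_assoc[symmetric] BcG)
  also have "X ** Bc = Ac ** X - P1 ** E ** P2" using syl by simp
  also have "(Ac ** X - P1 ** E ** P2) ** G = Ac ** (X ** G) - P1 ** (E ** G)"
    by (simp add: mat_diff_rdistrib matrix_mul_assoc[symmetric] P2G)
  finally have Xeq: "X = Ac ** (X ** G) - P1 ** (E ** G)" .
  have rd: "\<rho> + \<delta> > 0" using rho0 dp by simp
  have c1: "N (Ac ** (X ** G)) \<le> \<rho> * N (X ** G)"
    unfolding Ac_def
  proof (rule contraction(1)[OF N u _ rho0])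
    fix i assume "i \<in> K"
    then show "\<bar>e1 i * (\<alpha> i - c)\<bar> \<le> \<rho>"
      using al[of i] rho0 unfolding e1_def c_def \<rho>_def by (auto split: abs_split simp: field_simps)
  qed
  have c2: "N (X ** G) \<le> (1 / (\<rho> + \<delta>)) * N X"
    unfolding G_def
  proof (rule contraction(2)[OF N vK _])
    fix i assume i: "i \<in> K"
    show "\<bar>e2 i / (\<beta> i - c)\<bar> \<le> 1 / (\<rho> + \<delta>)"
    proof (cases "i \<in> I2")
      case True
      then show ?thesis using bc[OF i True] rd unfolding e2_def
        by (simp add: abs_div frac_le)
    qed (use rd in \<open>simp add: e2_def\<close>)
  qed (use rd in simp)
  have c3: "N (P1 ** (E ** G)) \<le> 1 * N (E ** G)"
    unfolding P1_def by (rule contraction(1)[OF N u]) (auto simp: e1_def)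
  have c4: "N (E ** G) \<le> (1 / (\<rho> + \<delta>)) * N E"
    unfolding G_def
  proof (rule contraction(2)[OF N vK _])
    fix i assume i: "i \<in> K"
    show "\<bar>e2 i / (\<beta> i - c)\<bar> \<le> 1 / (\<rho> + \<delta>)"
    proof (cases "i \<in> I2")
      case True
      then show ?thesis using bc[OF i True] rd unfolding e2_def
        by (simp add: abs_div frac_le)
    qed (use rd in \<open>simp add: e2_def\<close>)
  qed (use rd in simp)
  have "N X \<le> N (Ac ** (X ** G)) + N (P1 ** (E ** G))"
    using uin_props(4)[OF N] Xeq by metis
  also have "\<dots> \<le> \<rho> * ((1 / (\<rho> + \<delta>)) * N X) + (1 / (\<rho> + \<delta>)) * N E"
    using c1 c2 c3 c4 rho0 by (smt (verit) mult_left_mono)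
  finally have "N X \<le> \<rho> * ((1 / (\<rho> + \<delta>)) * N X) + (1 / (\<rho> + \<delta>)) * N E" .
  then have "(\<rho> + \<delta>) * N X \<le> (\<rho> + \<delta>) * (\<rho> * ((1 / (\<rho> + \<delta>)) * N X) + (1 / (\<rho> + \<delta>)) * N E)"
    by (rule mult_left_mono) (use rd in auto)
  also have "\<dots> = \<rho> * N X + N E" using rd by (intro aux_field) simp
  finally have "(\<rho> + \<delta>) * N X \<le> \<rho> * N X + N E" .
  then have "\<delta> * N X \<le> N E" by (simp add: algebra_simps)
  then show ?thesis unfolding X_def P1_def P2_def e1_def e2_def E_def .
qed

lemma sym_inner: "transpose M = M \<Longrightarrow> x \<bullet> (M *v y) = (M *v x) \<bullet> (y::real^'n)"
  by (metis dot_lmul_matrix transpose_matrix_vector)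

lemma quad_le_lemma:
  fixes Y C :: real
  assumes Y: "Y \<ge> 0" and H: "\<And>t. t > 0 \<Longrightarrow> 2 * t * Y \<le> t * t * C"
  shows "Y = 0"
proof (rule ccontr)
  assume "Y \<noteq> 0" then have Yp: "Y > 0" using Y by simp
  define t where "t = Y / (\<bar>C\<bar> + 1)"
  have tp: "t > 0" using Yp by (simp add: t_def)
  have "2 * Y \<le> t * C" using H[OF tp] tp by (simp add: algebra_simps)
  also have "\<dots> \<le> t * \<bar>C\<bar>" using tp by (simp add: mult_left_mono)
  also have "\<dots> < Y"
  proof -
    have "t * \<bar>C\<bar> = Y * (\<bar>C\<bar> / (\<bar>C\<bar> + 1))" by (simp add: t_def)
    also have "\<dots> < Y * 1" using Yp by (intro mult_strict_left_mono) auto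
    finally show ?thesis by simp
  qed
  finally show False using Yp by simp
qed

lemma eig_exists:
  fixes M :: "real^'n^'n"
  assumes sym: "transpose M = M" and S: "subspace S" and inv: "\<And>x. x \<in> S \<Longrightarrow> M *v x \<in> S"
    and ne: "S \<noteq> {0}"
  obtains x \<mu> where "x \<in> S" "norm x = 1" "M *v x = \<mu> *\<^sub>R x"
proof -
  define KS where "KS = sphere (0::real^'n) 1 \<inter> S"
  have cK: "compact KS" unfolding KS_def by (rule compact_Int_closed[OF compact_sphere closed_subspace[OF S]])
  obtain z where z: "z \<in> S" "z \<noteq> 0" using ne subspace_0[OF S] by blast
  have "z /\<^sub>R norm z \<in> KS" using z S unfolding KS_def by (simp add: subspace_scale)
  then have neK: "KS \<noteq> {}" by blast
  have cont: "continuous_on KS (\<lambda>x. x \<bullet> (M *v x))"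
    by (intro continuous_intros)
  obtain x where x: "x \<in> KS" and xmax: "\<And>y. y \<in> KS \<Longrightarrow> y \<bullet> (M *v y) \<le> x \<bullet> (M *v x)"
    using continuous_attains_sup[OF cK neK cont] by blast
  have xS: "x \<in> S" and nx: "norm x = 1" using x by (auto simp: KS_def)
  have xx: "x \<bullet> x = 1" using nx by (simp add: norm_eq_1)
  define lam where "lam = x \<bullet> (M *v x)"
  define y where "y = M *v x - lam *\<^sub>R x"
  have yS: "y \<in> S" unfolding y_def using inv[OF xS] xS S by (simp add: subspace_diff subspace_scale)
  have xy: "x \<bullet> y = 0" unfolding y_def lam_def using xx by (simp add: inner_diff_right)
  have Mxy: "(M *v x) \<bullet> y = y \<bullet> y"
  proof -
    have "M *v x = y + lam *\<^sub>R x" by (simp add: y_def)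
    then show ?thesis using xy by (simp add: inner_add_left)
  qed
  define C where "C = lam * (y \<bullet> y) - y \<bullet> (M *v y)"
  have "y \<bullet> y = 0"
  proof (rule quad_le_lemma[where C = C])
    show "y \<bullet> y \<ge> 0" by simp
    fix t :: real assume tp: "t > 0"
    define z where "z = x + t *\<^sub>R y"
    have zS: "z \<in> S" unfolding z_def using xS yS S by (simp add: subspace_add subspace_scale)
    have zz: "z \<bullet> z = 1 + t * t * (y \<bullet> y)"
      unfolding z_def using xx xy by (simp add: inner_add_left inner_add_right inner_commute algebra_simps)
    then have zpos: "z \<bullet> z > 0" by (simp add: add_pos_nonneg)
    then have nz: "norm z > 0" by simp
    have "(z /\<^sub>R norm z) \<in> KS" unfolding KS_def using zS S nz by (simp add: subspace_scale)
    then have "(z /\<^sub>R norm z) \<bullet> (M *v (z /\<^sub>R norm z)) \<le> lam" using xmax lam_def by blast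
    then have "(z \<bullet> (M *v z)) / (norm z)^2 \<le> lam"
      by (simp add: matrix_vector_mult_scaleR power2_eq_square divide_inverse mult_ac)
    then have q1: "z \<bullet> (M *v z) \<le> lam * (z \<bullet> z)"
      using nz by (simp add: divide_le_eq power2_norm_eq_inner)
    have "z \<bullet> (M *v z) = x \<bullet> (M *v x) + t * (x \<bullet> (M *v y)) + t * (y \<bullet> (M *v x)) + t * t * (y \<bullet> (M *v y))"
      unfolding z_def by (simp add: matrix_vector_right_distrib matrix_vector_mult_scaleR
          inner_add_left inner_add_right algebra_simps)
    also have "x \<bullet> (M *v y) = y \<bullet> y" using sym_inner[OF sym] Mxy by simp
    also have "y \<bullet> (M *v x) = y \<bullet> y" using Mxy by (simp add: inner_commute)
    finally have "z \<bullet> (M *v z) = lam + 2 * t * (y \<bullet> y) + t * t * (y \<bullet> (M *v y))"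
      by (simp add: lam_def algebra_simps)
    then show "2 * t * (y \<bullet> y) \<le> t * t * C"
      using q1 zz unfolding C_def by (simp add: algebra_simps)
  qed
  then have "y = 0" by simp
  then have "M *v x = lam *\<^sub>R x" by (simp add: y_def)
  then show ?thesis using that xS nx by blast
qed

lemma spectral_subspace_aux:
  fixes M :: "real^'n^'n"
  assumes sym: "transpose M = M"
  shows "\<forall>S. dim S = d \<longrightarrow> subspace S \<longrightarrow> (\<forall>x\<in>S. M *v x \<in> S) \<longrightarrow>
     (\<exists>B. B \<subseteq> S \<and> pairwise orthogonal B \<and> (\<forall>x\<in>B. norm x = 1) \<and> span B = S \<and>
          (\<forall>x\<in>B. \<exists>\<mu>. M *v x = \<mu> *\<^sub>R x))"
proof (induction d)
  case 0
  show ?case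
  proof (intro allI impI)
    fix S :: "(real^'n) set" assume "dim S = 0" "subspace S"
    then have "S = {0}" using subspace_0 by auto
    then show "\<exists>B. B \<subseteq> S \<and> pairwise orthogonal B \<and> (\<forall>x\<in>B. norm x = 1) \<and> span B = S \<and>
          (\<forall>x\<in>B. \<exists>\<mu>. M *v x = \<mu> *\<^sub>R x)"
      by (intro exI[of _ "{}"]) auto
  qed
next
  case (Suc d)
  show ?case
  proof (intro allI impI)
    fix S :: "(real^'n) set" assume dS: "dim S = Suc d" and S: "subspace S" and inv: "\<forall>x\<in>S. M *v x \<in> S"
    have "S \<noteq> {0}" using dS by auto
    then obtain x \<mu> where xS: "x \<in> S" and nx: "norm x = 1" and ev: "M *v x = \<mu> *\<^sub>R x"
      using eig_exists[OF sym S] inv by metis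
    have xx: "x \<bullet> x = 1" using nx by (simp add: norm_eq_1)
    define S' where "S' = {y \<in> S. \<forall>z\<in>span {x}. orthogonal z y}"
    have S'eq: "S' = {y \<in> S. x \<bullet> y = 0}"
      unfolding S'_def span_singleton orthogonal_def by auto
    have sub': "subspace S'" unfolding S'eq using S
      by (auto simp: subspace_def inner_add_right)
    have "dim S' + dim (span {x}) = dim S"
      unfolding S'_def by (rule dim_subspace_orthogonal_to_vectors) (use S xS span_minimal[of "{x}" S] in auto)
    moreover have "dim (span {x}) = 1" using nx by auto
    ultimately have dS': "dim S' = d" using dS by simp
    have inv': "\<forall>y\<in>S'. M *v y \<in> S'"
    proof
      fix y assume "y \<in> S'"
      then have "y \<in> S" "x \<bullet> y = 0" by (auto simp: S'eq)
      moreover have "x \<bullet> (M *v y) = \<mu> * (x \<bullet> y)" using sym_inner[OF sym] ev by simp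
      ultimately show "M *v y \<in> S'" using inv by (simp add: S'eq)
    qed
    obtain B where B: "B \<subseteq> S'" "pairwise orthogonal B" "\<forall>x\<in>B. norm x = 1" "span B = S'"
       "\<forall>x\<in>B. \<exists>\<mu>. M *v x = \<mu> *\<^sub>R x"
      using Suc.IH dS' sub' inv' by blast
    have Bx: "\<And>b. b \<in> B \<Longrightarrow> x \<bullet> b = 0" using B(1) by (auto simp: S'eq)
    show "\<exists>B. B \<subseteq> S \<and> pairwise orthogonal B \<and> (\<forall>x\<in>B. norm x = 1) \<and> span B = S \<and>
          (\<forall>x\<in>B. \<exists>\<mu>. M *v x = \<mu> *\<^sub>R x)"
    proof (intro exI[of _ "insert x B"] conjI)
      show "insert x B \<subseteq> S" using B(1) xS by (auto simp: S'eq)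
      show "pairwise orthogonal (insert x B)"
        using B(2) Bx by (auto simp: pairwise_insert orthogonal_def inner_commute)
      show "\<forall>y\<in>insert x B. norm y = 1" using B(3) nx by auto
      show "\<forall>y\<in>insert x B. \<exists>\<mu>. M *v y = \<mu> *\<^sub>R y" using B(5) ev by auto
      show "span (insert x B) = S"
      proof
        show "span (insert x B) \<subseteq> S"
          using \<open>insert x B \<subseteq> S\<close> S by (simp add: span_minimal)
        show "S \<subseteq> span (insert x B)"
        proof
          fix s assume sS: "s \<in> S"
          have "s - (x \<bullet> s) *\<^sub>R x \<in> S'" unfolding S'eq using sS xS S xx
            by (simp add: subspace_diff subspace_scale inner_diff_right)
          then have "s - (x \<bullet> s) *\<^sub>R x \<in> span (insert x B)" using B(4) span_mono[of B "insert x B"] by auto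
          moreover have "(x \<bullet> s) *\<^sub>R x \<in> span (insert x B)" by (simp add: span_base span_mul)
          ultimately have "(s - (x \<bullet> s) *\<^sub>R x) + (x \<bullet> s) *\<^sub>R x \<in> span (insert x B)" by (rule span_add)
          then show "s \<in> span (insert x B)" by simp
        qed
      qed
    qed
  qed
qed

lemma spectral_subspace:
  fixes M :: "real^'n^'n"
  assumes "transpose M = M" "subspace S" "\<And>x. x \<in> S \<Longrightarrow> M *v x \<in> S"
  obtains B where "B \<subseteq> S" "pairwise orthogonal B" "\<And>x. x \<in> B \<Longrightarrow> norm x = 1" "span B = S"
     "\<And>x. x \<in> B \<Longrightarrow> \<exists>\<mu>. M *v x = \<mu> *\<^sub>R x"
  using spectral_subspace_aux[OF assms(1), rule_format, OF refl assms(2)] assms(3) by blast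

lemma sum_delta_on:
  fixes v :: "'i \<Rightarrow> real^'n"
  assumes "orthonormal_on K a" "finite K" "k \<in> K"
  shows "(\<Sum>i\<in>K. (a i \<bullet> a k) *\<^sub>R v i) = v k"
proof -
  have "(\<Sum>i\<in>K. (a i \<bullet> a k) *\<^sub>R v i) = (\<Sum>i\<in>K. if i = k then v k else 0)"
    using assms by (intro sum.cong refl) (auto simp: orthonormal_onD)
  also have "\<dots> = v k" using assms by simp
  finally show ?thesis .
qed

lemma orthonormal_sum_sq:
  assumes "orthonormal_on K a" "finite K"
  shows "(\<Sum>i\<in>K. c i *\<^sub>R a i) \<bullet> (\<Sum>i\<in>K. c i *\<^sub>R a i) = (\<Sum>i\<in>K. c i * c i)"
proof -
  have "(\<Sum>i\<in>K. c i *\<^sub>R a i) \<bullet> (\<Sum>i\<in>K. c i *\<^sub>R a i) = (\<Sum>k\<in>K. c k * (a k \<bullet> (\<Sum>i\<in>K. c i *\<^sub>R a i)))"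
    by (simp add: inner_sum_left)
  also have "\<dots> = (\<Sum>k\<in>K. c k * c k)"
    using assms by (intro sum.cong refl) (simp add: orthonormal_inner_sum)
  finally show ?thesis .
qed

lemma orthonormal_map_exists:
  fixes a b :: "'i \<Rightarrow> real^'n"
  assumes a: "orthonormal_on K a" and b: "orthonormal_on K b" and K: "finite K"
  obtains U where "orthogonal_matrix U" "\<And>i. i \<in> K \<Longrightarrow> U *v a i = b i"
proof -
  define SA where "SA = {y. \<forall>x\<in>span (a ` K). orthogonal x y}"
  define SB where "SB = {y. \<forall>x\<in>span (b ` K). orthogonal x y}"
  have sA: "subspace SA" unfolding SA_def by (rule subspace_orthogonal_to_vectors)
  have sB: "subspace SB" unfolding SB_def by (rule subspace_orthogonal_to_vectors)
  have dA: "dim SA + card K = dim (UNIV :: (real^'n) set)"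
    using dim_subspace_orthogonal_to_vectors[of "span (a ` K)" UNIV] orthonormal_dim_span[OF a]
    unfolding SA_def by simp
  have dB: "dim SB + card K = dim (UNIV :: (real^'n) set)"
    using dim_subspace_orthogonal_to_vectors[of "span (b ` K)" UNIV] orthonormal_dim_span[OF b]
    unfolding SB_def by simp
  obtain g where g: "linear g" "g ` SA = SB" "\<And>x. x \<in> SA \<Longrightarrow> norm (g x) = norm x"
    using isometry_subspaces[OF sA sB] dA dB by (metis add_right_cancel)
  define L1 where "L1 = (\<lambda>x. (\<Sum>i\<in>K. (a i \<bullet> x) *\<^sub>R b i))"
  define h where "h = (\<lambda>x. x - (\<Sum>i\<in>K. (a i \<bullet> x) *\<^sub>R a i))"
  define f where "f = (\<lambda>x. L1 x + g (h x))"
  have lin1: "linear L1" unfolding L1_def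
    by (rule linearI) (simp_all add: inner_add_right scaleR_add_left sum.distrib scaleR_sum_right)
  have lin2: "linear h" unfolding h_def
    by (rule linearI) (simp_all add: inner_add_right scaleR_add_left sum.distrib scaleR_sum_right
        scaleR_diff_right)
  have linf: "linear f" unfolding f_def
    by (rule linearI) (simp_all add: linear_add[OF lin1] linear_add[OF lin2] linear_add[OF g(1)]
        linear_cmul[OF lin1] linear_cmul[OF lin2] linear_cmul[OF g(1)] scaleR_add_right)
  have nf: "norm (f x) = norm x" for x
  proof -
    define p where "p = (\<Sum>i\<in>K. (a i \<bullet> x) *\<^sub>R a i)"
    define q where "q = (\<Sum>i\<in>K. (a i \<bullet> x) *\<^sub>R b i)"
    define y where "y = x - p"
    have yA: "y \<in> SA" unfolding SA_def y_def p_def orthogonal_def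
      using orthonormal_residual_orth[OF a K] by (simp add: inner_commute)
    have gyB: "g y \<in> SB" using g(2) yA by blast
    have py: "p \<bullet> y = 0" using yA projsum_in_span[of "\<lambda>i. a i \<bullet> x" a K]
      unfolding SA_def p_def orthogonal_def by blast
    have qgy: "q \<bullet> g y = 0" using gyB projsum_in_span[of "\<lambda>i. a i \<bullet> x" b K]
      unfolding SB_def q_def orthogonal_def by blast
    have "x = p + y" by (simp add: y_def)
    then have "x \<bullet> x = p \<bullet> p + y \<bullet> y" using py by (simp add: inner_add_left inner_add_right inner_commute)
    also have "p \<bullet> p = q \<bullet> q" unfolding p_def q_def
      by (simp add: orthonormal_sum_sq[OF a K] orthonormal_sum_sq[OF b K])
    also have "y \<bullet> y = g y \<bullet> g y" using g(3)[OF yA] by (simp add: dot_square_norm)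
    finally have "x \<bullet> x = (q + g y) \<bullet> (q + g y)" using qgy
      by (simp add: inner_add_left inner_add_right inner_commute)
    moreover have "f x = q + g y" unfolding f_def q_def y_def p_def L1_def h_def by simp
    ultimately show ?thesis by (simp add: norm_eq_sqrt_inner)
  qed
  have otf: "orthogonal_transformation f" unfolding orthogonal_transformation using linf nf by simp
  define U where "U = matrix f"
  have U: "orthogonal_matrix U" using otf unfolding U_def orthogonal_transformation_matrix by simp
  have Uf: "U *v x = f x" for x using matrix_vector_mul(2)[OF linf] unfolding U_def by metis
  have "U *v a k = b k" if k: "k \<in> K" for k
  proof -
    have "f (a k) = (\<Sum>i\<in>K. (a i \<bullet> a k) *\<^sub>R b i) + g (a k - (\<Sum>i\<in>K. (a i \<bullet> a k) *\<^sub>R a i))"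
      by (simp add: f_def L1_def h_def)
    also have "\<dots> = b k" using sum_delta_on[OF a K k, of b] sum_delta_on[OF a K k, of a] linear_0[OF g(1)] by simp
    finally show ?thesis by (simp add: Uf)
  qed
  then show ?thesis using that U by blast
qed

lemma orthog_map_exists:
  fixes x y :: "'i \<Rightarrow> real^'n"
  assumes ox: "\<And>i k. i \<in> K \<Longrightarrow> k \<in> K \<Longrightarrow> i \<noteq> k \<Longrightarrow> x i \<bullet> x k = 0"
    and oy: "\<And>i k. i \<in> K \<Longrightarrow> k \<in> K \<Longrightarrow> i \<noteq> k \<Longrightarrow> y i \<bullet> y k = 0"
    and nxy: "\<And>i. i \<in> K \<Longrightarrow> norm (x i) = norm (y i)" and K: "finite K"
  obtains U where "orthogonal_matrix U" "\<And>i. i \<in> K \<Longrightarrow> U *v x i = y i"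
proof -
  define K' where "K' = {i \<in> K. x i \<noteq> 0}"
  define a where "a = (\<lambda>i. x i /\<^sub>R norm (x i))"
  define b where "b = (\<lambda>i. y i /\<^sub>R norm (y i))"
  have fK': "finite K'" using K by (simp add: K'_def)
  have oa: "orthonormal_on K' a" unfolding orthonormal_on_def a_def K'_def
    using ox by (auto simp: inner_commute dot_square_norm power2_eq_square field_simps)
  have nz: "\<And>i. i \<in> K' \<Longrightarrow> y i \<noteq> 0"
  proof
    fix i assume "i \<in> K'" "y i = 0"
    then show False using nxy[of i] by (simp add: K'_def)
  qed
  have ob: "orthonormal_on K' b" unfolding orthonormal_on_def b_def
    using oy nxy nz unfolding K'_def by (auto simp: inner_commute dot_square_norm power2_eq_square field_simps)
  obtain U where U: "orthogonal_matrix U" "\<And>i. i \<in> K' \<Longrightarrow> U *v a i = b i"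
    using orthonormal_map_exists[OF oa ob fK'] by blast
  have "U *v x i = y i" if i: "i \<in> K" for i
  proof (cases "x i = 0")
    case True
    then have "y i = 0" using nxy[OF i] by simp
    then show ?thesis using True by simp
  next
    case False
    then have iK: "i \<in> K'" using i by (simp add: K'_def)
    have "x i = norm (x i) *\<^sub>R a i" using False by (simp add: a_def)
    then have "U *v x i = norm (x i) *\<^sub>R (U *v a i)" by (metis matrix_vector_mult_scaleR)
    also have "\<dots> = norm (y i) *\<^sub>R b i" using U(2)[OF iK] nxy[OF i] by simp
    also have "\<dots> = y i" using nz[OF iK] by (simp add: b_def)
    finally show ?thesis .
  qed
  then show ?thesis using that U(1) by blast
qed

lemma proj_sym: "transpose (\<Sum>i\<in>K. outer (a i) (a i)) = (\<Sum>i\<in>K. outer (a i) (a i))"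
  by (simp add: transpose_sum transpose_outer)

lemma proj_in: "(\<Sum>i\<in>K. outer (a i) (a i)) *v x \<in> span (a ` K)"
  by (simp add: projsum_vec projsum_in_span)

lemma proj_idem:
  assumes "orthonormal_on K a" "finite K"
  shows "(\<Sum>i\<in>K. outer (a i) (a i)) *v ((\<Sum>i\<in>K. outer (a i) (a i)) *v x) = (\<Sum>i\<in>K. outer (a i) (a i)) *v x"
  by (rule projsum_apply_span[OF assms proj_in])

lemma proj_inner: "x \<bullet> ((\<Sum>i\<in>K. outer (a i) (a i)) *v y) = ((\<Sum>i\<in>K. outer (a i) (a i)) *v x) \<bullet> y"
  by (rule sym_inner[OF proj_sym])

lemma outer_sandwich: "(U::real^'n^'n) ** outer x y ** transpose V = outer (U *v x) (V *v y)"
  by (simp add: mat_mult_outer outer_mult_mat)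

lemma sum_sandwich: "U ** (\<Sum>e\<in>B. f e) ** (V::real^'n^'n) = (\<Sum>e\<in>B. U ** f e ** V)"
  by (simp add: matrix_mul_sum_right matrix_mul_sum_left)

lemma proj_times_compl:
  fixes a :: "'i \<Rightarrow> real^'n" and Q :: "real^'n^'n"
  assumes "transpose Q = Q"
  shows "(\<Sum>e\<in>B. outer (a e) (a e)) ** (mat 1 - Q) = (\<Sum>e\<in>B. outer (a e) (a e - Q *v a e))"
  unfolding matrix_mul_sum_left
  by (intro sum.cong refl) (simp add: outer_mult_mat transpose_diff assms mat_vec_diff)

lemma sin_theta_sym:
  fixes w v :: "'i \<Rightarrow> real^'n"
  assumes N: "unitarily_invariant_norm N"
    and ow: "orthonormal_on J w" and ov: "orthonormal_on J v" and fJ: "finite J"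
  shows "N ((\<Sum>i\<in>J. outer (w i) (w i)) ** (mat 1 - (\<Sum>i\<in>J. outer (v i) (v i))))
       = N ((\<Sum>i\<in>J. outer (v i) (v i)) ** (mat 1 - (\<Sum>i\<in>J. outer (w i) (w i))))"
proof -
  define P where "P = (\<Sum>i\<in>J. outer (w i) (w i))"
  define Q where "Q = (\<Sum>i\<in>J. outer (v i) (v i))"
  define SP where "SP = span (w ` J)"
  define SQ where "SQ = span (v ` J)"
  have Psym: "transpose P = P" and Qsym: "transpose Q = Q" unfolding P_def Q_def by (rule proj_sym)+
  have Pin: "P *v x \<in> SP" for x unfolding P_def SP_def by (rule proj_in)
  have Qin: "Q *v x \<in> SQ" for x unfolding Q_def SQ_def by (rule proj_in)
  have Pfix: "x \<in> SP \<Longrightarrow> P *v x = x" for x unfolding P_def SP_def by (rule projsum_apply_span[OF ow fJ])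
  have Qfix: "x \<in> SQ \<Longrightarrow> Q *v x = x" for x unfolding Q_def SQ_def by (rule projsum_apply_span[OF ov fJ])
  have Pinner: "x \<bullet> (P *v y) = (P *v x) \<bullet> y" for x y unfolding P_def by (rule proj_inner)
  have Qinner: "x \<bullet> (Q *v y) = (Q *v x) \<bullet> y" for x y unfolding Q_def by (rule proj_inner)
  have PP: "(P *v x) \<bullet> (P *v y) = x \<bullet> (P *v y)" for x y
    using Pinner[of x "P *v y"] Pfix[OF Pin[of y]] by simp
  have dSP: "dim SP = card J" unfolding SP_def by (rule orthonormal_dim_span[OF ow])
  have dSQ: "dim SQ = card J" unfolding SQ_def by (rule orthonormal_dim_span[OF ov])
  have sSP: "subspace SP" unfolding SP_def by simp
  have sSQ: "subspace SQ" unfolding SQ_def by simp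
  define M where "M = Q ** P ** Q"
  have Msym: "transpose M = M" unfolding M_def
    by (simp add: matrix_transpose_mul Psym Qsym matrix_mul_assoc)
  have Minv: "M *v x \<in> SQ" for x
    unfolding M_def by (simp add: matrix_vector_mul_assoc[symmetric] Qin)
  obtain B where B: "B \<subseteq> SQ" "pairwise orthogonal B" "\<And>x. x \<in> B \<Longrightarrow> norm x = 1" "span B = SQ"
     "\<And>x. x \<in> B \<Longrightarrow> \<exists>\<mu>. M *v x = \<mu> *\<^sub>R x"
    using spectral_subspace[OF Msym sSQ Minv] by blast
  have B0: "0 \<notin> B" using B(3) by force
  have indB: "independent B" using pairwise_orthogonal_independent[OF B(2) B0] .
  have fB: "finite B" using indB by (rule independent_imp_finite)
  have cB: "card B = card J" using dim_span_eq_card_independent[OF indB] B(4) dSQ by simp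
  have oB: "orthonormal_on B (\<lambda>e. e)"
    unfolding orthonormal_on_def using B(2,3)
    by (auto simp: pairwise_def orthogonal_def dot_square_norm)
  have Qsum: "Q = (\<Sum>e\<in>B. outer e e)"
    unfolding Q_def using projsum_eq[OF ov fJ oB fB] B(4) SQ_def by simp
  have eQ: "e \<in> B \<Longrightarrow> Q *v e = e" for e using B(1) Qfix by blast
  have ePe: "e \<bullet> (P *v e') = (if e = e' then (P *v e) \<bullet> (P *v e) else 0)" if e: "e \<in> B" "e' \<in> B" for e e'
  proof (cases "e = e'")
    case True then show ?thesis using PP[of e e] by simp
  next
    case False
    obtain \<mu> where mu: "M *v e' = \<mu> *\<^sub>R e'" using B(5)[OF e(2)] by blast
    have "e \<bullet> (M *v e') = (Q *v e) \<bullet> (P *v (Q *v e'))"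
      unfolding M_def by (simp add: matrix_vector_mul_assoc[symmetric] Qinner)
    also have "\<dots> = e \<bullet> (P *v e')" using eQ e by simp
    finally have "e \<bullet> (P *v e') = \<mu> * (e \<bullet> e')" using mu by simp
    also have "e \<bullet> e' = 0" using oB e False by (auto dest: orthonormal_onD)
    finally show ?thesis using False by simp
  qed
  define \<nu> where "\<nu> = (\<lambda>e. norm (P *v e))"
  have nu2: "(P *v e) \<bullet> (P *v e) = \<nu> e * \<nu> e" for e by (simp add: \<nu>_def dot_square_norm power2_eq_square)
  define B1 where "B1 = {e \<in> B. P *v e \<noteq> 0}"
  define B0 where "B0 = B - B1"
  have fB1: "finite B1" and fB0: "finite B0" using fB by (auto simp: B1_def B0_def)
  have BU: "B = B1 \<union> B0" unfolding B0_def B1_def by auto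
  have cB10: "card B = card B1 + card B0"
    by (subst BU, rule card_Un_disjoint[OF fB1 fB0]) (auto simp: B0_def)
  define g1 where "g1 = (\<lambda>e. P *v e /\<^sub>R \<nu> e)"
  have nu_pos: "e \<in> B1 \<Longrightarrow> \<nu> e > 0" for e by (simp add: B1_def \<nu>_def)
  have nu0: "e \<in> B0 \<Longrightarrow> P *v e = 0" for e by (simp add: B0_def B1_def)
  have Pe_g1: "e \<in> B1 \<Longrightarrow> P *v e = \<nu> e *\<^sub>R g1 e" for e using nu_pos[of e] by (simp add: g1_def)
  have og1: "orthonormal_on B1 g1"
    unfolding orthonormal_on_def
  proof (intro ballI)
    fix e e' assume e: "e \<in> B1" "e' \<in> B1"
    have "g1 e \<bullet> g1 e' = ((P *v e) \<bullet> (P *v e')) / (\<nu> e * \<nu> e')" by (simp add: g1_def field_simps)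
    also have "(P *v e) \<bullet> (P *v e') = e \<bullet> (P *v e')" by (rule PP)
    also have "\<dots> = (if e = e' then \<nu> e * \<nu> e else 0)" using ePe[of e e'] e nu2 by (simp add: B1_def)
    finally show "g1 e \<bullet> g1 e' = (if e = e' then 1 else 0)" using nu_pos[OF e(1)] nu_pos[OF e(2)] by simp
  qed
  have g1SP: "g1 e \<in> SP" for e unfolding g1_def using Pin sSP by (simp add: subspace_scale)
  define T where "T = {y \<in> SP. \<forall>x\<in>span (g1 ` B1). orthogonal x y}"
  have spg1: "span (g1 ` B1) \<subseteq> SP" by (rule span_minimal) (use g1SP sSP in auto)
  have "dim T + dim (span (g1 ` B1)) = dim SP"
    unfolding T_def by (rule dim_subspace_orthogonal_to_vectors[OF subspace_span sSP spg1])
  then have dT: "dim T = card B0" using orthonormal_dim_span[OF og1] dSP cB cB10 by simp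
  have sT: "subspace T" unfolding T_def using sSP
    by (auto simp: subspace_def orthogonal_clauses)
  obtain C where C: "C \<subseteq> T" "pairwise orthogonal C" "\<And>x. x \<in> C \<Longrightarrow> norm x = 1" "independent C"
      "card C = dim T" "span C = T"
    using orthonormal_basis_subspace[OF sT] by blast
  have fC: "finite C" using C(4) by (rule independent_imp_finite)
  obtain \<phi> where phi: "bij_betw \<phi> B0 C" using finite_same_card_bij[OF fB0 fC] C(5) dT by metis
  define g where "g = (\<lambda>e. if e \<in> B1 then g1 e else \<phi> e)"
  have phiC: "e \<in> B0 \<Longrightarrow> \<phi> e \<in> C" for e using phi by (auto simp: bij_betw_def)
  have B1B0: "e \<in> B \<Longrightarrow> e \<notin> B1 \<Longrightarrow> e \<in> B0" for e by (simp add: B0_def)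
  have og: "orthonormal_on B g"
    unfolding orthonormal_on_def
  proof (intro ballI)
    fix e e' assume e: "e \<in> B" "e' \<in> B"
    show "g e \<bullet> g e' = (if e = e' then 1 else 0)"
    proof (cases "e \<in> B1"; cases "e' \<in> B1")
      assume "e \<in> B1" "e' \<in> B1" then show ?thesis using og1 by (simp add: g_def orthonormal_onD)
    next
      assume a: "e \<in> B1" "e' \<notin> B1"
      then have "\<phi> e' \<in> T" using phiC B1B0 e C(1) by blast
      then have "g1 e \<bullet> \<phi> e' = 0" using a(1) unfolding T_def orthogonal_def by (auto intro: span_base)
      then show ?thesis using a by (auto simp: g_def)
    next
      assume a: "e \<notin> B1" "e' \<in> B1"
      then have "\<phi> e \<in> T" using phiC B1B0 e C(1) by blast
      then have "g1 e' \<bullet> \<phi> e = 0" using a(2) unfolding T_def orthogonal_def by (auto intro: span_base)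
      then show ?thesis using a by (auto simp: g_def inner_commute)
    next
      assume a: "e \<notin> B1" "e' \<notin> B1"
      then have b: "e \<in> B0" "e' \<in> B0" using B1B0 e by auto
      show ?thesis
      proof (cases "e = e'")
        case True
        then show ?thesis using C(3)[OF phiC[OF b(1)]] a by (simp add: g_def dot_square_norm)
      next
        case False
        then have "\<phi> e \<noteq> \<phi> e'" using phi b by (auto simp: bij_betw_def inj_on_def)
        then have "\<phi> e \<bullet> \<phi> e' = 0" using C(2) phiC[OF b(1)] phiC[OF b(2)]
          by (auto simp: pairwise_def orthogonal_def)
        then show ?thesis using a False by (simp add: g_def)
      qed
    qed
  qed
  have gSP: "e \<in> B \<Longrightarrow> g e \<in> SP" for e
    using g1SP phiC B1B0 C(1) unfolding g_def T_def by auto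
  have spg: "span (g ` B) = SP"
  proof
    show "span (g ` B) \<subseteq> SP" by (rule span_minimal) (use gSP sSP in auto)
    have "card (g ` B) = dim SP" using orthonormal_card[OF og] cB dSP by simp
    then show "SP \<subseteq> span (g ` B)"
      using card_eq_dim[of "g ` B" SP] orthonormal_independent[OF og] gSP fB by auto
  qed
  have Psum: "P = (\<Sum>e\<in>B. outer (g e) (g e))"
    unfolding P_def using projsum_eq[OF ow fJ og fB] spg SP_def by simp
  have eg: "e'' \<bullet> g e = (if e'' = e then \<nu> e else 0)" if e: "e'' \<in> B" "e \<in> B" for e'' e
  proof -
    have "e'' \<bullet> g e = e'' \<bullet> (P *v g e)" using Pfix[OF gSP[OF e(2)]] by simp
    also have "\<dots> = (P *v e'') \<bullet> g e" by (rule Pinner)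
    also have "\<dots> = (if e'' = e then \<nu> e else 0)"
    proof (cases "e'' \<in> B1")
      case True
      then have "(P *v e'') \<bullet> g e = \<nu> e'' * (g e'' \<bullet> g e)" using Pe_g1[OF True] by (simp add: g_def)
      then show ?thesis using og e by (simp add: orthonormal_onD)
    next
      case False
      then have "P *v e'' = 0" using nu0 B1B0 e by blast
      moreover have "e'' = e \<Longrightarrow> \<nu> e = 0" using \<open>P *v e'' = 0\<close> by (simp add: \<nu>_def)
      ultimately show ?thesis by auto
    qed
    finally show ?thesis .
  qed
  have Qg: "e \<in> B \<Longrightarrow> Q *v g e = \<nu> e *\<^sub>R e" for e
  proof -
    assume e: "e \<in> B"
    have "Q *v g e = (\<Sum>e''\<in>B. (e'' \<bullet> g e) *\<^sub>R e'')" unfolding Qsum by (simp add: projsum_vec)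
    also have "\<dots> = (\<Sum>e''\<in>B. if e'' = e then \<nu> e *\<^sub>R e else 0)"
      using eg e by (intro sum.cong refl) auto
    also have "\<dots> = \<nu> e *\<^sub>R e" using e fB by simp
    finally show ?thesis .
  qed
  define f where "f = (\<lambda>e. e - P *v e)"
  define h where "h = (\<lambda>e. g e - Q *v g e)"
  have ff: "f e \<bullet> f e' = (if e = e' then 1 - \<nu> e * \<nu> e else 0)" if e: "e \<in> B" "e' \<in> B" for e e'
  proof -
    have "f e \<bullet> f e' = e \<bullet> e' - e \<bullet> (P *v e') - (P *v e) \<bullet> e' + (P *v e) \<bullet> (P *v e')"
      by (simp add: f_def inner_diff_left inner_diff_right)
    also have "(P *v e) \<bullet> e' = e \<bullet> (P *v e')" by (simp add: Pinner)
    also have "(P *v e) \<bullet> (P *v e') = e \<bullet> (P *v e')" by (rule PP)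
    finally have "f e \<bullet> f e' = e \<bullet> e' - e \<bullet> (P *v e')" by simp
    moreover have "e \<bullet> e' = (if e = e' then 1 else 0)" using orthonormal_onD[OF oB e] by simp
    ultimately show ?thesis using ePe[OF e] nu2 by simp
  qed
  have hh: "h e \<bullet> h e' = (if e = e' then 1 - \<nu> e * \<nu> e else 0)" if e: "e \<in> B" "e' \<in> B" for e e'
  proof -
    have 1: "h e \<bullet> h e' = g e \<bullet> g e' - \<nu> e' * (g e \<bullet> e') - \<nu> e * (e \<bullet> g e') + \<nu> e * \<nu> e' * (e \<bullet> e')"
      using Qg e by (simp add: h_def inner_diff_left inner_diff_right algebra_simps)
    have 2: "g e \<bullet> e' = (if e' = e then \<nu> e else 0)" using eg[OF e(2,1)] by (simp add: inner_commute)
    have 3: "e \<bullet> g e' = (if e = e' then \<nu> e' else 0)" using eg[OF e] .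
    have 4: "e \<bullet> e' = (if e = e' then 1 else 0)" using orthonormal_onD[OF oB e] by simp
    have 5: "g e \<bullet> g e' = (if e = e' then 1 else 0)" using orthonormal_onD[OF og e] by simp
    show ?thesis
    proof (cases "e = e'")
      case True
      then show ?thesis unfolding 1 2 3 4 5 by (simp add: algebra_simps)
    next
      case False
      then show ?thesis unfolding 1 2 3 4 5 by simp
    qed
  qed
  obtain U where U: "orthogonal_matrix U" "\<And>e. e \<in> B \<Longrightarrow> U *v g e = e"
    using orthonormal_map_exists[OF og oB fB] by blast
  have nhf: "norm (h e) = norm (f e)" if "e \<in> B" for e
    using hh[OF that that] ff[OF that that] by (simp add: norm_eq_sqrt_inner)
  obtain V where V: "orthogonal_matrix V" "\<And>e. e \<in> B \<Longrightarrow> V *v h e = f e"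
  proof -
    have ox: "\<And>i k. i \<in> B \<Longrightarrow> k \<in> B \<Longrightarrow> i \<noteq> k \<Longrightarrow> h i \<bullet> h k = 0" using hh by simp
    have oy: "\<And>i k. i \<in> B \<Longrightarrow> k \<in> B \<Longrightarrow> i \<noteq> k \<Longrightarrow> f i \<bullet> f k = 0" using ff by simp
    show ?thesis using orthog_map_exists[where x=h and y=f and K=B, OF ox oy nhf fB] that by blast
  qed
  have X: "P ** (mat 1 - Q) = (\<Sum>e\<in>B. outer (g e) (h e))"
    unfolding h_def by (subst Psum) (rule proj_times_compl[OF Qsym])
  have Y: "Q ** (mat 1 - P) = (\<Sum>e\<in>B. outer e (f e))"
    unfolding f_def by (subst Qsum) (rule proj_times_compl[OF Psym])
  have "U ** (P ** (mat 1 - Q)) ** transpose V = (\<Sum>e\<in>B. outer (U *v g e) (V *v h e))"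
    unfolding X sum_sandwich outer_sandwich ..
  also have "\<dots> = Q ** (mat 1 - P)" unfolding Y using U(2) V(2) by (intro sum.cong refl) auto
  finally have "N (Q ** (mat 1 - P)) = N (U ** (P ** (mat 1 - Q)) ** transpose V)" by simp
  also have "\<dots> = N (P ** (mat 1 - Q))"
    using uin_props(7)[OF N U(1)] V(1) by simp
  finally show ?thesis unfolding P_def Q_def by simp
qed

lemma mat_pow_eig: "Phi *v x = c *\<^sub>R x \<Longrightarrow> mat_pow Phi k *v x = (c ^ k) *\<^sub>R x"
  by (induction k) (simp_all add: matrix_vector_mul_assoc[symmetric] matrix_vector_mult_scaleR)

lemma poly_mat_eig:
  assumes "Phi *v x = c *\<^sub>R x"
  shows "poly_mat p Phi *v x = poly p c *\<^sub>R x"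
proof -
  have "poly_mat p Phi *v x = (\<Sum>i\<le>degree p. (coeff p i * c ^ i) *\<^sub>R x)"
    unfolding poly_mat_def matrix_vec_sum_left
    by (intro sum.cong refl) (simp add: mat_scaleR_vec mat_pow_eig[OF assms])
  also have "\<dots> = poly p c *\<^sub>R x" by (simp add: poly_altdef scaleR_sum_left)
  finally show ?thesis .
qed

lemma eig_diagm:
  fixes u :: "'i \<Rightarrow> real^'n"
  assumes u: "orthonormal_on K u" "finite K" "card K = CARD('n)"
    and ev: "\<And>i. i \<in> K \<Longrightarrow> A *v u i = \<alpha> i *\<^sub>R u i"
  shows "A = diagm K u \<alpha>"
proof -
  have "A = A ** (\<Sum>i\<in>K. outer (u i) (u i))" using projsum_complete[OF u] by simp
  also have "\<dots> = (\<Sum>i\<in>K. outer (A *v u i) (u i))" by (simp add: matrix_mul_sum_right mat_mult_outer)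
  also have "\<dots> = diagm K u \<alpha>" unfolding diagm_def
    by (intro sum.cong refl) (simp add: ev outer_scaleR_left)
  finally show ?thesis .
qed

lemma diagm_indicator:
  assumes "I \<subseteq> K" "finite K"
  shows "diagm K u (\<lambda>i. if i \<in> I then 1 else 0) = (\<Sum>i\<in>I. outer (u i) (u i))"
proof -
  have "diagm K u (\<lambda>i. if i \<in> I then 1 else 0) = (\<Sum>i\<in>K. if i \<in> I then outer (u i) (u i) else 0)"
    unfolding diagm_def by (intro sum.cong refl) simp
  also have "\<dots> = (\<Sum>i\<in>K \<inter> I. outer (u i) (u i))" by (rule sum.inter_restrict[OF assms(2), symmetric])
  also have "K \<inter> I = I" using assms(1) by blast
  finally show ?thesis .
qed

lemma diagm_compl:
  fixes u :: "'i \<Rightarrow> real^'n"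
  assumes u: "orthonormal_on K u" "finite K" "card K = CARD('n)" and I: "I \<subseteq> K"
  shows "diagm K u (\<lambda>i. if i \<in> K - I then 1 else 0) = mat 1 - (\<Sum>i\<in>I. outer (u i) (u i))"
proof -
  have "diagm K u (\<lambda>i. if i \<in> K - I then 1 else 0) = (\<Sum>i\<in>K - I. outer (u i) (u i))"
    by (rule diagm_indicator) (use u in auto)
  also have "\<dots> = (\<Sum>i\<in>K. outer (u i) (u i)) - (\<Sum>i\<in>I. outer (u i) (u i))"
    by (rule sum_diff[OF u(2) I])
  also have "\<dots> = mat 1 - (\<Sum>i\<in>I. outer (u i) (u i))" using projsum_complete[OF u] by simp
  finally show ?thesis .
qed

lemma ereal_bound:
  assumes "d > 0" "d * x \<le> y"
  shows "ereal x \<le> ereal y / ereal d"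
  using assms by (simp add: pos_le_divide_eq mult.commute)

theorem theorem5:
  fixes Phi Psi :: "real^'n^'n"
    and phi psi :: "nat \<Rightarrow> real"
    and w v :: "nat \<Rightarrow> real^'n"
    and j r :: nat
    and p :: "real poly"
    and N :: "real^'n^'n \<Rightarrow> real"
  defines "n \<equiv> CARD('n)"
  defines "J \<equiv> {j+1..j+r}"
  defines "pp \<equiv> (\<lambda>i. poly p (phi i))"
  defines "a1 \<equiv> Min (pp ` J)"
  defines "b1 \<equiv> Max (pp ` J)"
  defines "delta1 \<equiv> min (ext_eig n psi (j+r+1) - ereal b1) (ereal a1 - ext_eig n psi j)"
  defines "a2 \<equiv> psi (j+1)"
  defines "b2 \<equiv> psi (j+r)"
  defines "delta2 \<equiv> min ((INF i\<in>calA1 n J pp b2. ereal (pp i)) - ereal b2)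
                          (ereal a2 - (SUP i\<in>calA2 n J pp a2. ereal (pp i)))"
  assumes symPhi: "transpose Phi = Phi"
    and symPsi: "transpose Psi = Psi"
    and phi_sorted: "\<And>i k. 1 \<le> i \<Longrightarrow> i \<le> k \<Longrightarrow> k \<le> n \<Longrightarrow> phi i \<le> phi k"
    and psi_sorted: "\<And>i k. 1 \<le> i \<Longrightarrow> i \<le> k \<Longrightarrow> k \<le> n \<Longrightarrow> psi i \<le> psi k"
    and w_eig: "\<And>i. i \<in> {1..n} \<Longrightarrow> Phi *v w i = phi i *\<^sub>R w i"
    and v_eig: "\<And>i. i \<in> {1..n} \<Longrightarrow> Psi *v v i = psi i *\<^sub>R v i"
    and w_on: "\<And>i k. i \<in> {1..n} \<Longrightarrow> k \<in> {1..n} \<Longrightarrow> w i \<bullet> w k = (if i = k then 1 else 0)"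
    and v_on: "\<And>i k. i \<in> {1..n} \<Longrightarrow> k \<in> {1..n} \<Longrightarrow> v i \<bullet> v k = (if i = k then 1 else 0)"
    and r_pos: "1 \<le> r"
    and jr_le: "j + r \<le> n"
    and gap1: "ext_eig n phi (j+1) - ext_eig n phi j > 0"
    and gap2: "ext_eig n phi (j+r+1) - ext_eig n phi (j+r) > 0"
    and gap3: "ext_eig n psi (j+1) - ext_eig n psi j > 0"
    and gap4: "ext_eig n psi (j+r+1) - ext_eig n psi (j+r) > 0"
    and N_ui: "unitarily_invariant_norm N"
  shows "(calA1 n J pp b1 \<union> calA2 n J pp a1 = {1..n} - J \<and>
             delta1 > 0 \<and> ereal (a1 - psi (j+1)) < delta1 \<and> ereal (psi (j+r) - b1) < delta1
           \<longrightarrow> ereal (N (proj_mat w J ** (mat 1 - proj_mat v J)))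
                 \<le> ereal (N (poly_mat p Phi - Psi)) / delta1)
       \<and> (calA1 n J pp b2 \<union> calA2 n J pp a2 = {1..n} - J \<and>
             delta2 > 0 \<and> ereal (a2 - Min (pp ` J)) < delta2 \<and> ereal (Max (pp ` J) - b2) < delta2
           \<longrightarrow> ereal (N (proj_mat w J ** (mat 1 - proj_mat v J)))
                 \<le> ereal (N (poly_mat p Phi - Psi)) / delta2)"
proof -
  have n_def: "n = CARD('n)" using \<open>n \<equiv> CARD('n)\<close> by simp
  have J_def: "J = {j+1..j+r}" using \<open>J \<equiv> {j+1..j+r}\<close> by simp
  have pp_def: "pp = (\<lambda>i. poly p (phi i))" using \<open>pp \<equiv> (\<lambda>i. poly p (phi i))\<close> by simp
  have a1_def: "a1 = Min (pp ` J)" using \<open>a1 \<equiv> Min (pp ` J)\<close> by simp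
  have b1_def: "b1 = Max (pp ` J)" using \<open>b1 \<equiv> Max (pp ` J)\<close> by simp
  have d1_def: "delta1 = min (ext_eig n psi (j+r+1) - ereal b1) (ereal a1 - ext_eig n psi j)"
    using \<open>delta1 \<equiv> min (ext_eig n psi (j+r+1) - ereal b1) (ereal a1 - ext_eig n psi j)\<close> by simp
  have a2_def: "a2 = psi (j+1)" using \<open>a2 \<equiv> psi (j+1)\<close> by simp
  have b2_def: "b2 = psi (j+r)" using \<open>b2 \<equiv> psi (j+r)\<close> by simp
  have d2_def: "delta2 = min ((INF i\<in>calA1 n J pp b2. ereal (pp i)) - ereal b2)
                          (ereal a2 - (SUP i\<in>calA2 n J pp a2. ereal (pp i)))"
    using \<open>delta2 \<equiv> min ((INF i\<in>calA1 n J pp b2. ereal (pp i)) - ereal b2)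
                          (ereal a2 - (SUP i\<in>calA2 n J pp a2. ereal (pp i)))\<close> by simp
  define I0 where "I0 = {1..n}"
  have fI0: "finite I0" by (simp add: I0_def)
  have cI0: "card I0 = CARD('n)" by (simp add: I0_def n_def)
  have ow: "orthonormal_on I0 w" using w_on by (simp add: orthonormal_on_def I0_def)
  have ov: "orthonormal_on I0 v" using v_on by (simp add: orthonormal_on_def I0_def)
  have JI0: "J \<subseteq> I0" using jr_le by (auto simp: J_def I0_def)
  have fJ: "finite J" by (simp add: J_def)
  have Jne: "J \<noteq> {}" using r_pos by (auto simp: J_def)
  define P where "P = (\<Sum>i\<in>J. outer (w i) (w i))"
  define Q where "Q = (\<Sum>i\<in>J. outer (v i) (v i))"
  have PQ: "proj_mat w J = P" "proj_mat v J = Q" by (simp_all add: P_def Q_def proj_mat_outer)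
  define A where "A = poly_mat p Phi"
  have Aeig: "i \<in> I0 \<Longrightarrow> A *v w i = pp i *\<^sub>R w i" for i
    unfolding A_def pp_def I0_def by (rule poly_mat_eig) (use w_eig in \<open>simp add: I0_def\<close>)
  have Adiag: "A = diagm I0 w pp" by (rule eig_diagm[OF ow fI0 cI0 Aeig])
  have Psidiag: "Psi = diagm I0 v psi" by (rule eig_diagm[OF ov fI0 cI0]) (use v_eig in \<open>simp add: I0_def\<close>)
  have Pind: "diagm I0 w (\<lambda>i. if i \<in> J then 1 else 0) = P"
    unfolding P_def by (rule diagm_indicator[OF JI0 fI0])
  have Qind: "diagm I0 v (\<lambda>i. if i \<in> J then 1 else 0) = Q"
    unfolding Q_def by (rule diagm_indicator[OF JI0 fI0])
  have Pc: "diagm I0 w (\<lambda>i. if i \<in> I0 - J then 1 else 0) = mat 1 - P"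
    unfolding P_def by (rule diagm_compl[OF ow fI0 cI0 JI0])
  have Qc: "diagm I0 v (\<lambda>i. if i \<in> I0 - J then 1 else 0) = mat 1 - Q"
    unfolding Q_def by (rule diagm_compl[OF ov fI0 cI0 JI0])
  have full: "J = I0 \<Longrightarrow> N (P ** (mat 1 - Q)) = 0"
  proof -
    assume "J = I0"
    then have "Q = mat 1" unfolding Q_def using projsum_complete[OF ov fI0 cI0] by simp
    then show ?thesis using uin_props(1)[OF N_ui] by simp
  qed
  have Nneg: "N (Psi - A) = N (A - Psi)" using uin_props(2)[OF N_ui, of "A - Psi"] by simp
  have sym: "N (P ** (mat 1 - Q)) = N (Q ** (mat 1 - P))"
    unfolding P_def Q_def by (rule sin_theta_sym[OF N_ui orthonormal_on_subset[OF ow JI0]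
          orthonormal_on_subset[OF ov JI0] fJ])
  have compl: "i \<in> I0 - J \<Longrightarrow> (1 \<le> i \<and> i \<le> j) \<or> (j + r + 1 \<le> i \<and> i \<le> n)" for i
    by (auto simp: I0_def J_def)
  have caseA: "ereal (N (P ** (mat 1 - Q))) \<le> ereal (N (A - Psi)) / delta1" if d1pos: "delta1 > 0"
  proof (cases delta1)
    case PInf
    have "j = 0"
    proof (rule ccontr)
      assume "j \<noteq> 0"
      then have "delta1 \<le> ereal a1 - ereal (psi j)" using jr_le unfolding d1_def ext_eig_def by simp
      then show False using PInf by simp
    qed
    moreover have "n < j + r + 1"
    proof (rule ccontr)
      assume "\<not> n < j + r + 1"
      then have "delta1 \<le> ereal (psi (j+r+1)) - ereal b1" unfolding d1_def ext_eig_def by simp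
      then show False using PInf by simp
    qed
    ultimately have "J = I0" using jr_le by (auto simp: J_def I0_def)
    then show ?thesis using full PInf by simp
  next
    case MInf then show ?thesis using d1pos by simp
  next
    case (real d)
    have dpos: "d > 0" using d1pos real by simp
    have al: "a1 \<le> pp i \<and> pp i \<le> b1" if "i \<in> J" for i
      unfolding a1_def b1_def using fJ that by auto
    have ab: "a1 \<le> b1"
    proof -
      obtain i where "i \<in> J" using Jne by blast
      then show ?thesis using al by force
    qed
    have be: "psi k \<le> a1 - d \<or> b1 + d \<le> psi k" if k: "k \<in> I0 - J" for k
    proof (cases "k \<le> j")
      case True
      then have k1: "1 \<le> k" "j \<ge> 1" using k by (auto simp: I0_def)
      then have "delta1 \<le> ereal a1 - ereal (psi j)" using jr_le unfolding d1_def ext_eig_def by simp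
      then have "d \<le> a1 - psi j" using real by simp
      moreover have "psi k \<le> psi j" using psi_sorted[of k j] k1 True jr_le by simp
      ultimately show ?thesis by simp
    next
      case False
      then have k1: "j + r + 1 \<le> k" "k \<le> n" using compl[OF k] by auto
      then have "delta1 \<le> ereal (psi (j+r+1)) - ereal b1" unfolding d1_def ext_eig_def by simp
      then have "d \<le> psi (j+r+1) - b1" using real by simp
      moreover have "psi (j+r+1) \<le> psi k" using psi_sorted[of "j+r+1" k] k1 by simp
      ultimately show ?thesis by simp
    qed
    have "d * N (diagm I0 w (\<lambda>i. if i \<in> J then 1 else 0) ** diagm I0 v (\<lambda>i. if i \<in> I0 - J then 1 else 0))
           \<le> N (A - Psi)"
      by (rule sylvester[OF N_ui ow fI0 cI0 ov Adiag Psidiag ab dpos]) (use al be in auto)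
    then have "d * N (P ** (mat 1 - Q)) \<le> N (A - Psi)" by (simp only: Pind Qc)
    then show ?thesis unfolding real by (rule ereal_bound[OF dpos])
  qed
  have caseB: "ereal (N (P ** (mat 1 - Q))) \<le> ereal (N (A - Psi)) / delta2"
    if hB: "calA1 n J pp b2 \<union> calA2 n J pp a2 = {1..n} - J" and d2pos: "delta2 > 0"
  proof -
    define A1 where "A1 = calA1 n J pp b2"
    define A2 where "A2 = calA2 n J pp a2"
    have d2eq: "delta2 = min ((INF i\<in>A1. ereal (pp i)) - ereal b2) (ereal a2 - (SUP i\<in>A2. ereal (pp i)))"
      unfolding d2_def A1_def A2_def ..
    have A12: "A1 \<union> A2 = I0 - J" using hB by (simp add: A1_def A2_def I0_def)
    have A1p: "i \<in> A1 \<Longrightarrow> pp i > b2" for i by (simp add: A1_def calA1_def)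
    have A2p: "i \<in> A2 \<Longrightarrow> pp i < a2" for i by (simp add: A2_def calA2_def)
    show ?thesis
    proof (cases delta2)
      case PInf
      have "A1 = {}"
      proof (rule ccontr)
        assume "A1 \<noteq> {}"
        then obtain i where "i \<in> A1" by blast
        then have "(INF i\<in>A1. ereal (pp i)) \<le> ereal (pp i)" by (rule INF_lower)
        then have "(INF i\<in>A1. ereal (pp i)) - ereal b2 \<le> ereal (pp i) - ereal b2"
          by (rule ereal_minus_mono) simp
        then have "delta2 \<le> ereal (pp i - b2)" unfolding d2eq by (simp add: min.coboundedI1)
        then show False using PInf by simp
      qed
      moreover have "A2 = {}"
      proof (rule ccontr)
        assume "A2 \<noteq> {}"
        then obtain i where "i \<in> A2" by blast
        then have "ereal (pp i) \<le> (SUP i\<in>A2. ereal (pp i))" by (rule SUP_upper)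
        then have "ereal a2 - (SUP i\<in>A2. ereal (pp i)) \<le> ereal a2 - ereal (pp i)"
          by (rule ereal_minus_mono[OF order_refl])
        then have "delta2 \<le> ereal (a2 - pp i)" unfolding d2eq by (simp add: min.coboundedI2)
        then show False using PInf by simp
      qed
      ultimately have "J = I0" using A12 JI0 by blast
      then show ?thesis using full PInf by simp
    next
      case MInf then show ?thesis using d2pos by simp
    next
      case (real d)
      have dpos: "d > 0" using d2pos real by simp
      have ab: "a2 \<le> b2" unfolding a2_def b2_def using psi_sorted[of "j+1" "j+r"] r_pos jr_le by simp
      have al: "a2 \<le> psi i \<and> psi i \<le> b2" if "i \<in> J" for i
        unfolding a2_def b2_def using psi_sorted[of "j+1" i] psi_sorted[of i "j+r"] that jr_le
        by (auto simp: J_def)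
      have be: "pp k \<le> a2 - d \<or> b2 + d \<le> pp k" if k: "k \<in> I0 - J" for k
      proof -
        have "k \<in> A1 \<or> k \<in> A2" using A12 k by blast
        then show ?thesis
        proof
          assume kA: "k \<in> A1"
          have "ereal d \<le> (INF i\<in>A1. ereal (pp i)) - ereal b2"
            using real unfolding d2eq by (metis min.cobounded1)
          also have "\<dots> \<le> ereal (pp k) - ereal b2"
            by (rule ereal_minus_mono[OF INF_lower[OF kA] order_refl])
          finally show ?thesis by simp
        next
          assume kA: "k \<in> A2"
          have "ereal d \<le> ereal a2 - (SUP i\<in>A2. ereal (pp i))"
            using real unfolding d2eq by (metis min.cobounded2)
          also have "\<dots> \<le> ereal a2 - ereal (pp k)"
            by (rule ereal_minus_mono[OF order_refl SUP_upper[OF kA]])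
          finally show ?thesis by simp
        qed
      qed
      have "d * N (diagm I0 v (\<lambda>i. if i \<in> J then 1 else 0) ** diagm I0 w (\<lambda>i. if i \<in> I0 - J then 1 else 0))
           \<le> N (Psi - A)"
        by (rule sylvester[OF N_ui ov fI0 cI0 ow Psidiag Adiag ab dpos]) (use al be in auto)
      then have "d * N (Q ** (mat 1 - P)) \<le> N (A - Psi)" by (simp only: Qind Pc Nneg)
      then have "d * N (P ** (mat 1 - Q)) \<le> N (A - Psi)" by (simp only: sym)
      then show ?thesis unfolding real by (rule ereal_bound[OF dpos])
    qed
  qed
  show ?thesis
    unfolding PQ A_def[symmetric]
    using caseA caseB by blast
qed

end
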